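(* The parallel reduction $\Rightarrow$ on $PPC_{EM}$ terms has the diamond property: for all terms $t,t_1,t_2$, if $t\Rightarrow t_1$ and $t\Rightarrow t_2$, then there exists a term $t_3$ with $t_1\Rightarrow t_3$ and $t_2\Rightarrow t_3$.
   Context: **Terms of $PPC_{EM}$.** Names $x,y,\dots$; $\theta$ ranges over finite lists of names. Terms: $$t ::= x \mid \hat{x} \mid t\,t \mid t\bullet t \mid [\theta]\,p\to b \mid b\langle\theta\vdash\mu\mid\Delta\rangle.$$ Here $x$ is a variable occurrence and $\hat x$ a matchable occurrence of a name. In a matching $b\langle\theta\vdash\mu\mid\Delta\rangle$, $\mu$ is a decided match, i.e. either $\bot$ or a substitution (a finite map from names to terms), and $\Delta$ is a finite multiset of pairs of terms. The notation $(a,p)\Delta$ is the multiset union of $\Delta$ with $\{(a,p)\}$. As a term, $\bot$ denotes a fixed closed normal term without $\bullet$ or matchings. **Binding and free names.** In $[\theta]p\to b$, $\theta$ binds matchables $\hat x$ ($x\in\theta$) in $p$ and variables $x\in\theta$ in $b$. In $b\langle\theta\vdash\mu\mid\Delta\rangle$, $\theta$ binds variables of $b$ and matchables in the second components of the pairs of $\Delta$. $\mathrm{fn}(a)$ is the set of free names of $a$. Terms are taken modulo $\alpha$-conversion, with all bound names distinct and disjoint from free names. **Substitution.** $t^\sigma$ is capture-avoiding replacement of free variables $x\in\mathrm{dom}(\sigma)$ by $\sigma(x)$, propagating into $\mathrm{codom}\,\mu$ and into $\Delta$. **Disjoint union $\uplus$ of decided matches.** It is commutative; $\bot\uplus\mu=\bot$;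 $\sigma_1\uplus\sigma_2=\bot$ if the domains overlap, and otherwise it is their union. **Failure pairs.** Call $(a,p)$ a *failure pair* (relative to $\theta$) if it is one of: - $(\hat y,\hat x)$ with $x\notin\theta$ and $x\ne y$; - $(a_1\bullet a_2,\hat x)$ with $x\notin\theta$; - $([\theta_a]p_a\to b_a,\hat x)$ with $x\notin\theta$; - $(\hat x,p_1\bullet p_2)$; - $([\theta_a]p_a\to b_a,p_1\bullet p_2)$; - $(a,[\theta_p]p_p\to b_p)$. **Parallel reduction $\Rightarrow$.** It is defined inductively on terms. It is extended to decided matches by $\bot\Rightarrow\bot$ and $\sigma\Rightarrow\sigma'$ iff $\mathrm{dom}\,\sigma=\mathrm{dom}\,\sigma'$ and $\sigma(x)\Rightarrow\sigma'(x)$ for all $x$. It is extended to multisets of pairs elementwise, componentwise. The rules are: - (Id) $t\Rightarrow t$. - (Cgr) If $t_1\Rightarrow t_1'$ and $t_2\Rightarrow t_2'$, then $t_1t_2\Rightarrow t_1't_2'$ and $t_1\bullet t_2\Rightarrow t_1'\bullet t_2'$. - (Cgr) If $p\Rightarrow p'$ and $b\Rightarrow b'$, then $[\theta]p\to b\Rightarrow[\theta]p'\to b'$. - (Cgr) If $b\Rightarrow b'$, $\mu\Rightarrow\mu'$ and $\Delta\Rightarrow\Delta'$, then $b\langle\theta\vdash\mu\mid\Delta\rangle\Rightarrow b'\langle\theta\vdash\mu'\mid\Delta'\rangle$. - (Init) If $p\Rightarrow p'$, $b\Rightarrow b'$ and $a\Rightarrow a'$, then $([\theta]p\to b)a\Rightarrow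 b'\langle\theta\vdash\emptyset\mid(a',p')\rangle$. - (Struct) If $t\Rightarrow t'$, then $\hat x\,t\Rightarrow\hat x\bullet t'$. - (Struct) If $t_i\Rightarrow t_i'$ for $i=1,2,3$, then $(t_1\bullet t_2)t_3\Rightarrow(t_1'\bullet t_2')\bullet t_3'$. - (Match) If $b\Rightarrow b'$, $\mu\Rightarrow\mu'$, $a\Rightarrow a'$ and $\Delta\Rightarrow\Delta'$, with $x\in\theta$ and $\mathrm{fn}(a)\cap\theta=\emptyset$, then $b\langle\theta\vdash\mu\mid(a,\hat x)\Delta\rangle\Rightarrow b'\langle\theta\vdash\mu'\uplus\{x\mapsto a'\}\mid\Delta'\rangle$. - (Match) If $b\Rightarrow b'$, $\mu\Rightarrow\mu'$ and $\Delta\Rightarrow\Delta'$, with $x\notin\theta$, then $b\langle\theta\vdash\mu\mid(\hat x,\hat x)\Delta\rangle\Rightarrow b'\langle\theta\vdash\mu'\mid\Delta'\rangle$. - (Match) If $b\Rightarrow b'$, $\mu\Rightarrow\mu'$, $\Delta\Rightarrow\Delta'$, $a_i\Rightarrow a_i'$ and $p_i\Rightarrow p_i'$, then $b\langle\theta\vdash\mu\mid(a_1\bullet a_2,p_1\bullet p_2)\Delta\rangle\Rightarrow b'\langle\theta\vdash\mu'\mid(a_1',p_1')(a_2',p_2')\Delta'\rangle$. - (Match) If $b\Rightarrow b'$ and $\Delta\Rightarrow\Delta'$, with $(a,p)$ a failure pair, then $b\langle\theta\vdash\mu\mid(a,p)\Delta\rangle\Rightarrow b'\langle\theta\vdash\bot\mid\Delta'\rangle$.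 - (Res) If $b\Rightarrow b'$ and $\sigma\Rightarrow\sigma'$, with $\mathrm{dom}\,\sigma=\theta$, then $b\langle\theta\vdash\sigma\mid\emptyset\rangle\Rightarrow(b')^{\sigma'}$. - (Res) If $\mathrm{dom}\,\sigma\ne\theta$, then $b\langle\theta\vdash\sigma\mid\emptyset\rangle\Rightarrow\bot$. - (Res) $b\langle\theta\vdash\bot\mid\Delta\rangle\Rightarrow\bot$. *)

theory Defs
  imports Main "HOL-Library.Multiset" "HOL-Library.Finite_Map"
begin

text \<open>
  Terms of PPC_EM, represented with de Bruijn indices (terms modulo alpha-conversion).
  There are two independent index name-spaces: one for variable occurrences (Var)
  and one for matchable occurrences (Mat), because a binder theta binds variables
  and matchables in different regions:
  \<^item> Abs n p b  is  [theta] p -> b  with  n = length theta:  theta binds matchables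
    in p (matchable depth + n) and variables in b (variable depth + n).
  \<^item> Mtch b n mu Delta  is  b<theta |- mu | Delta>  with n = length theta:  theta binds
    variables of b (variable depth + n) and matchables of the second components of
    the pairs of Delta (matchable depth + n).  First components and the codomain of mu
    are outside the scope of theta.
  Within theta the names are numbered 0..n-1; a decided match mu is either None (bottom)
  or a finite map from names to terms, where key i < n denotes the i-th name of theta and a
  key i >= n denotes some name not in theta.
\<close>

datatype trm =
    Var nat
  | Mat nat
  | App trm trm
  | Cmp trm trm
  | Abs nat trm trm
  | Mtch trm nat "(nat, trm) fmap option" "(trm \<times> trm) multiset"

primrec shiftV :: "nat \<Rightarrow> nat \<Rightarrow> trm \<Rightarrow> trm" where
  "shiftV k c (Var i) = (if i < c then Var i else Var (i + k))"
| "shiftV k c (Mat i) = Mat i"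
| "shiftV k c (App s t) = App (shiftV k c s) (shiftV k c t)"
| "shiftV k c (Cmp s t) = Cmp (shiftV k c s) (shiftV k c t)"
| "shiftV k c (Abs n p b) = Abs n (shiftV k c p) (shiftV k (c + n) b)"
| "shiftV k c (Mtch b n mu D) =
     Mtch (shiftV k (c + n) b) n (map_option (fmmap (shiftV k c)) mu)
          (image_mset (map_prod (shiftV k c) (shiftV k c)) D)"

primrec shiftM :: "nat \<Rightarrow> nat \<Rightarrow> trm \<Rightarrow> trm" where
  "shiftM k c (Var i) = Var i"
| "shiftM k c (Mat i) = (if i < c then Mat i else Mat (i + k))"
| "shiftM k c (App s t) = App (shiftM k c s) (shiftM k c t)"
| "shiftM k c (Cmp s t) = Cmp (shiftM k c s) (shiftM k c t)"
| "shiftM k c (Abs n p b) = Abs n (shiftM k (c + n) p) (shiftM k c b)"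
| "shiftM k c (Mtch b n mu D) =
     Mtch (shiftM k c b) n (map_option (fmmap (shiftM k c)) mu)
          (image_mset (map_prod (shiftM k c) (shiftM k (c + n))) D)"

text \<open>Capture-avoiding substitution of the n variables bound at variable depth cv
  (matchable depth cm) by the terms s 0, ..., s (n-1) (living outside the binder);
  the binder disappears, so free variables above are decremented by n.\<close>
primrec substV :: "nat \<Rightarrow> nat \<Rightarrow> nat \<Rightarrow> (nat \<Rightarrow> trm) \<Rightarrow> trm \<Rightarrow> trm" where
  "substV cv cm n s (Var i) =
     (if i < cv then Var i
      else if i < cv + n then shiftM cm 0 (shiftV cv 0 (s (i - cv)))
      else Var (i - n))"
| "substV cv cm n s (Mat i) = Mat i"
| "substV cv cm n s (App t u) = App (substV cv cm n s t) (substV cv cm n s u)"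
| "substV cv cm n s (Cmp t u) = Cmp (substV cv cm n s t) (substV cv cm n s u)"
| "substV cv cm n s (Abs k p b) = Abs k (substV cv (cm + k) n s p) (substV (cv + k) cm n s b)"
| "substV cv cm n s (Mtch b k mu D) =
     Mtch (substV (cv + k) cm n s b) k (map_option (fmmap (substV cv cm n s)) mu)
          (image_mset (map_prod (substV cv cm n s) (substV cv (cm + k) n s)) D)"

definition inst :: "nat \<Rightarrow> (nat, trm) fmap \<Rightarrow> trm \<Rightarrow> trm" where
  "inst n \<sigma> b = substV 0 0 n (\<lambda>i. the (fmlookup \<sigma> i)) b"

definition dunion :: "(nat, trm) fmap option \<Rightarrow> (nat, trm) fmap option \<Rightarrow> (nat, trm) fmap option" where
  "dunion m1 m2 = (case (m1, m2) of
       (Some s1, Some s2) \<Rightarrow> (if fmdom' s1 \<inter> fmdom' s2 = {} then Some (s1 ++\<^sub>f s2) else None)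
     | _ \<Rightarrow> None)"

text \<open>In a pair (a, p), a lives outside
  theta and p inside; a matchable Mat i in p with i >= n is the free (w.r.t. theta) name
  that appears as Mat (i - n) outside.\<close>
fun failure_pair :: "nat \<Rightarrow> trm \<times> trm \<Rightarrow> bool" where
  "failure_pair n (Mat j, Mat i) = (n \<le> i \<and> j \<noteq> i - n)"
| "failure_pair n (Cmp a1 a2, Mat i) = (n \<le> i)"
| "failure_pair n (Abs k pa ba, Mat i) = (n \<le> i)"
| "failure_pair n (Mat j, Cmp p1 p2) = True"
| "failure_pair n (Abs k pa ba, Cmp p1 p2) = True"
| "failure_pair n (a, Abs k pp bp) = True"
| "failure_pair n _ = False"

inductive par :: "trm \<Rightarrow> trm \<Rightarrow> trm \<Rightarrow> bool" for bot :: trm where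
  Id: "par bot t t"
| CgrApp: "par bot t1 t1' \<Longrightarrow> par bot t2 t2' \<Longrightarrow> par bot (App t1 t2) (App t1' t2')"
| CgrCmp: "par bot t1 t1' \<Longrightarrow> par bot t2 t2' \<Longrightarrow> par bot (Cmp t1 t2) (Cmp t1' t2')"
| CgrAbs: "par bot p p' \<Longrightarrow> par bot b b' \<Longrightarrow> par bot (Abs n p b) (Abs n p' b')"
| CgrMtch: "par bot b b' \<Longrightarrow> rel_option (fmrel (par bot)) mu mu' \<Longrightarrow>
     rel_mset (rel_prod (par bot) (par bot)) D D' \<Longrightarrow>
     par bot (Mtch b n mu D) (Mtch b' n mu' D')"
| Init: "par bot p p' \<Longrightarrow> par bot b b' \<Longrightarrow> par bot a a' \<Longrightarrow>
     par bot (App (Abs n p b) a) (Mtch b' n (Some fmempty) {#(a', p')#})"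
| StructMat: "par bot t t' \<Longrightarrow> par bot (App (Mat x) t) (Cmp (Mat x) t')"
| StructCmp: "par bot t1 t1' \<Longrightarrow> par bot t2 t2' \<Longrightarrow> par bot t3 t3' \<Longrightarrow>
     par bot (App (Cmp t1 t2) t3) (Cmp (Cmp t1' t2') t3')"
| MatchBind: "par bot b b' \<Longrightarrow> rel_option (fmrel (par bot)) mu mu' \<Longrightarrow> par bot a a' \<Longrightarrow>
     rel_mset (rel_prod (par bot) (par bot)) D D' \<Longrightarrow> x < n \<Longrightarrow>
     par bot (Mtch b n mu (add_mset (a, Mat x) D))
             (Mtch b' n (dunion mu' (Some (fmupd x a' fmempty))) D')"
| MatchMat: "par bot b b' \<Longrightarrow> rel_option (fmrel (par bot)) mu mu' \<Longrightarrow>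
     rel_mset (rel_prod (par bot) (par bot)) D D' \<Longrightarrow> n \<le> x \<Longrightarrow>
     par bot (Mtch b n mu (add_mset (Mat (x - n), Mat x) D)) (Mtch b' n mu' D')"
| MatchCmp: "par bot b b' \<Longrightarrow> rel_option (fmrel (par bot)) mu mu' \<Longrightarrow>
     rel_mset (rel_prod (par bot) (par bot)) D D' \<Longrightarrow>
     par bot a1 a1' \<Longrightarrow> par bot a2 a2' \<Longrightarrow> par bot p1 p1' \<Longrightarrow> par bot p2 p2' \<Longrightarrow>
     par bot (Mtch b n mu (add_mset (Cmp a1 a2, Cmp p1 p2) D))
             (Mtch b' n mu' (add_mset (a1', p1') (add_mset (a2', p2') D')))"
| MatchFail: "par bot b b' \<Longrightarrow> rel_mset (rel_prod (par bot) (par bot)) D D' \<Longrightarrow>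
     failure_pair n (a, p) \<Longrightarrow>
     par bot (Mtch b n mu (add_mset (a, p) D)) (Mtch b' n None D')"
| ResOk: "par bot b b' \<Longrightarrow> fmrel (par bot) \<sigma> \<sigma>' \<Longrightarrow> fmdom' \<sigma> = {..<n} \<Longrightarrow>
     par bot (Mtch b n (Some \<sigma>) {#}) (inst n \<sigma>' b')"
| ResDom: "fmdom' \<sigma> \<noteq> {..<n} \<Longrightarrow> par bot (Mtch b n (Some \<sigma>) {#}) bot"
| ResBot: "par bot (Mtch b n None D) bot"
monos multiset.rel_mono fmap.rel_mono option.rel_mono prod.rel_mono

text \<open>For terms without
  compounds and matchings the only redexes are applications headed by an abstraction
  (Init) or by a matchable (Struct).\<close>
primrec pure_closed :: "nat \<Rightarrow> nat \<Rightarrow> trm \<Rightarrow> bool" where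
  "pure_closed cv cm (Var i) = (i < cv)"
| "pure_closed cv cm (Mat i) = (i < cm)"
| "pure_closed cv cm (App s t) = (pure_closed cv cm s \<and> pure_closed cv cm t)"
| "pure_closed cv cm (Cmp s t) = False"
| "pure_closed cv cm (Abs n p b) = (pure_closed cv (cm + n) p \<and> pure_closed (cv + n) cm b)"
| "pure_closed cv cm (Mtch b n mu D) = False"

primrec pure_normal :: "trm \<Rightarrow> bool" where
  "pure_normal (Var i) = True"
| "pure_normal (Mat i) = True"
| "pure_normal (App s t) = (pure_normal s \<and> pure_normal t \<and>
     (case s of Abs _ _ _ \<Rightarrow> False | Mat _ \<Rightarrow> False | _ \<Rightarrow> True))"
| "pure_normal (Cmp s t) = False"
| "pure_normal (Abs n p b) = (pure_normal p \<and> pure_normal b)"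
| "pure_normal (Mtch b n mu D) = False"

end

theory Submission
  imports Defs
begin


lemmas MS = fmap.map_comp option.map_comp multiset.map_comp prod.map_comp o_def
lemmas MI = option.map_cong fmap.map_cong multiset.map_cong prod.map_cong

lemma shiftV_shiftM: "shiftV k c (shiftM j d t) = shiftM j d (shiftV k c t)"
  by (induction t arbitrary: c d) (auto simp: MS intro!: MI)

lemma shiftV_shiftV1: "d \<le> c \<Longrightarrow> shiftV k (j + c) (shiftV j d u) = shiftV j d (shiftV k c u)"
  by (induction u arbitrary: c d) (auto simp: MS add.assoc intro!: MI)

lemma shiftM_shiftM1: "d \<le> c \<Longrightarrow> shiftM k (j + c) (shiftM j d u) = shiftM j d (shiftM k c u)"
  by (induction u arbitrary: c d) (auto simp: MS add.assoc intro!: MI)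

lemma shiftV_shiftV2: "e \<le> c \<Longrightarrow> c \<le> cv + e \<Longrightarrow> shiftV d c (shiftV cv e w) = shiftV (d+cv) e w"
  by (induction w arbitrary: e c) (auto simp: MS intro!: MI)

lemma shiftM_shiftM2: "e \<le> c \<Longrightarrow> c \<le> cv + e \<Longrightarrow> shiftM d c (shiftM cv e w) = shiftM (d+cv) e w"
  by (induction w arbitrary: e c) (auto simp: MS intro!: MI)

lemma shiftV_shiftV1': "j + d \<le> C \<Longrightarrow> shiftV k C (shiftV j d u) = shiftV j d (shiftV k (C - j) u)"
  using shiftV_shiftV1[of d "C - j" k j u] by simp
lemma shiftM_shiftM1': "j + d \<le> C \<Longrightarrow> shiftM k C (shiftM j d u) = shiftM j d (shiftM k (C - j) u)"
  using shiftM_shiftM1[of d "C - j" k j u] by simp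

lemma shiftV_substV:
  "shiftV k (c + cv) (substV cv cm n s b) = substV cv cm n (\<lambda>i. shiftV k c (s i)) (shiftV k (c + n + cv) b)"
  by (induction b arbitrary: cv cm) (auto simp: MS add.assoc shiftV_shiftM shiftV_shiftV1' intro!: MI)

lemma shiftM_substV:
  "shiftM k (c + cm) (substV cv cm n s b) = substV cv cm n (\<lambda>i. shiftM k c (s i)) (shiftM k (c + cm) b)"
  by (induction b arbitrary: cv cm) (auto simp: MS add.assoc shiftV_shiftM shiftM_shiftM1' intro!: MI)

lemma substV_shiftV: "c \<le> cv \<Longrightarrow>
  substV (d + cv) cm m s (shiftV d c u) = shiftV d c (substV cv cm m s u)"
  by (induction u arbitrary: cv cm c) (auto simp: MS add.assoc shiftV_shiftM shiftV_shiftV2 intro!: MI)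

lemma substV_shiftM: "c \<le> cm \<Longrightarrow>
  substV cv (e + cm) m s (shiftM e c u) = shiftM e c (substV cv cm m s u)"
  by (induction u arbitrary: cv cm c) (auto simp: MS add.assoc shiftV_shiftM shiftM_shiftM2 intro!: MI)

lemma substV_shiftV_cancel: "c \<le> d \<Longrightarrow> d \<le> c + k \<Longrightarrow>
  substV d e n \<sigma> (shiftV (n+k) c w) = shiftV k c w"
  by (induction w arbitrary: c d e) (auto simp: MS intro!: MI)


lemma substV_shiftV': "c + d \<le> CV \<Longrightarrow>
  substV CV cm m s (shiftV d c u) = shiftV d c (substV (CV - d) cm m s u)"
  using substV_shiftV[of c "CV - d" d cm m s u] by simp

lemma substV_shiftM': "c + e \<le> CM \<Longrightarrow>
  substV cv CM m s (shiftM e c u) = shiftM e c (substV cv (CM - e) m s u)"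
  using substV_shiftM[of c "CM - e" cv e m s u] by simp

lemma substV_cancel: "c \<le> d \<Longrightarrow> d + n \<le> c + K \<Longrightarrow>
  substV d e n \<sigma> (shiftM j c' (shiftV K c w)) = shiftM j c' (shiftV (K - n) c w)"
  by (induction w arbitrary: c d e c') (auto simp: MS intro!: MI)

lemma substV_substV:
  "substV (cv + d) (cm + e) m s (substV d e n \<sigma> b) =
   substV d e n (\<lambda>i. substV cv cm m s (\<sigma> i)) (substV (cv + n + d) (cm + e) m s b)"
  apply (induction b arbitrary: d e)
  apply (auto simp: MS add.assoc shiftV_shiftM substV_shiftV' substV_shiftM' substV_cancel intro!: MI)
  apply (simp_all add: ac_simps)
  done



lemma substV_cong: "(\<And>i. i < n \<Longrightarrow> s i = s' i) \<Longrightarrow> substV cv cm n s t = substV cv cm n s' t"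
  by (induction t arbitrary: cv cm) (auto simp: MS intro!: MI)

lemma closed_shiftV: "pure_closed cv cm t \<Longrightarrow> cv \<le> c \<Longrightarrow> shiftV k c t = t"
  by (induction t arbitrary: cv cm c) auto
lemma closed_shiftM: "pure_closed cv cm t \<Longrightarrow> cm \<le> c \<Longrightarrow> shiftM k c t = t"
  by (induction t arbitrary: cv cm c) auto
lemma closed_substV: "pure_closed cv cm t \<Longrightarrow> cv \<le> c \<Longrightarrow> substV c e n s t = t"
  by (induction t arbitrary: cv cm c e) auto

lemma inst_look: "fmdom' \<sigma> = {..<n} \<Longrightarrow> i < n \<Longrightarrow> the (fmlookup (fmmap f \<sigma>) i) = f (the (fmlookup \<sigma> i))"
proof -
  assume "fmdom' \<sigma> = {..<n}" "i < n"
  then have "i \<in> fmdom' \<sigma>" by simp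
  then obtain v where "fmlookup \<sigma> i = Some v" by (meson fmlookup_dom'_iff)
  then show ?thesis by simp
qed

lemma inst_look2: "fmdom' \<sigma> = {..<n} \<Longrightarrow> i < n \<Longrightarrow> the (map_option f (fmlookup \<sigma> i)) = f (the (fmlookup \<sigma> i))"
  using inst_look[of \<sigma> n i f] by simp

lemma shiftV_inst: "fmdom' \<sigma> = {..<n} \<Longrightarrow>
  shiftV k c (inst n \<sigma> b) = inst n (fmmap (shiftV k c) \<sigma>) (shiftV k (c + n) b)"
  unfolding inst_def using shiftV_substV[of k c 0 0 n "\<lambda>i. the (fmlookup \<sigma> i)" b]
  apply simp
  apply (rule substV_cong)
  apply (simp add: inst_look2)
  done

lemma shiftM_inst: "fmdom' \<sigma> = {..<n} \<Longrightarrow>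
  shiftM k c (inst n \<sigma> b) = inst n (fmmap (shiftM k c) \<sigma>) (shiftM k c b)"
  unfolding inst_def using shiftM_substV[of k c 0 0 n "\<lambda>i. the (fmlookup \<sigma> i)" b]
  apply simp
  apply (rule substV_cong)
  apply (simp add: inst_look2)
  done

lemma substV_inst: "fmdom' \<sigma> = {..<n} \<Longrightarrow>
  substV cv cm m s (inst n \<sigma> b) = inst n (fmmap (substV cv cm m s) \<sigma>) (substV (cv + n) cm m s b)"
  unfolding inst_def using substV_substV[of cv 0 cm 0 m s n "\<lambda>i. the (fmlookup \<sigma> i)" b]
  apply simp
  apply (rule substV_cong)
  apply (simp add: inst_look2)
  done

lemma fmmap_single[simp]: "fmmap f (fmupd x a fmempty) = fmupd x (f a) fmempty"
  by (rule fmap_ext) simp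

lemma map_dunion: "map_option (fmmap f) (dunion m1 m2) = dunion (map_option (fmmap f) m1) (map_option (fmmap f) m2)"
  by (auto simp: dunion_def split: option.splits)

lemma relmu_map: "rel_option (fmrel R) mu mu' \<Longrightarrow> (\<And>x y. R x y \<Longrightarrow> S (f x) (g y)) \<Longrightarrow>
   rel_option (fmrel S) (map_option (fmmap f) mu) (map_option (fmmap g) mu')"
  by (auto simp: option.rel_map fmap.rel_map elim!: option.rel_mono_strong fmap.rel_mono_strong)

lemma fmrel_map: "fmrel R mu mu' \<Longrightarrow> (\<And>x y. R x y \<Longrightarrow> S (f x) (g y)) \<Longrightarrow>
   fmrel S (fmmap f mu) (fmmap g mu')"
  by (auto simp: fmap.rel_map elim!: fmap.rel_mono_strong)

lemma relD_map: "rel_mset (rel_prod R R) D D' \<Longrightarrow> (\<And>x y. R x y \<Longrightarrow> S (f1 x) (g1 y)) \<Longrightarrow>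
   (\<And>x y. R x y \<Longrightarrow> S (f2 x) (g2 y)) \<Longrightarrow>
   rel_mset (rel_prod S S) (image_mset (map_prod f1 f2) D) (image_mset (map_prod g1 g2) D')"
  by (auto simp: multiset.rel_map elim!: multiset.rel_mono_strong)

lemma fp_shiftV: "failure_pair n (a, p) \<Longrightarrow> failure_pair n (shiftV k c a, shiftV k c' p)"
  by (cases "(n, (a, p))" rule: failure_pair.cases) auto
lemma fp_shiftM: "failure_pair n (a, p) \<Longrightarrow> failure_pair n (shiftM k c a, shiftM k (c + n) p)"
  by (cases "(n, (a, p))" rule: failure_pair.cases) auto
lemma fp_substV: "failure_pair n (a, p) \<Longrightarrow> failure_pair n (substV cv cm m s a, substV cv cm' m s p)"
  by (cases "(n, (a, p))" rule: failure_pair.cases) auto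


lemma par_refl_mu: "rel_option (fmrel (par bt)) mu mu"
  by (auto intro!: option.rel_refl fmap.rel_refl par.Id)
lemma par_refl_D: "rel_mset (rel_prod (par bt) (par bt)) D D"
  by (auto intro!: multiset.rel_refl par.Id)

lemma par_shiftV:
  assumes "par bt t t'" "pure_closed 0 0 bt"
  shows "par bt (shiftV k c t) (shiftV k c t')"
  using assms(1)
proof (induction arbitrary: c rule: par.induct)
  case (Id t)
  then show ?case by (rule par.Id)
next
  case (CgrApp t1 t1' t2 t2')
  then show ?case by (simp add: par.CgrApp)
next
  case (CgrCmp t1 t1' t2 t2')
  then show ?case by (simp add: par.CgrCmp)
next
  case (CgrAbs p p' b b' n)
  then show ?case by (simp add: par.CgrAbs)
next
  case (CgrMtch b b' mu mu' D D' n)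
  have "rel_option (fmrel (par bt)) (map_option (fmmap (shiftV k c)) mu) (map_option (fmmap (shiftV k c)) mu')"
    by (rule relmu_map[OF CgrMtch(3)]) blast
  moreover have "rel_mset (rel_prod (par bt) (par bt)) (image_mset (map_prod (shiftV k c) (shiftV k c)) D)
     (image_mset (map_prod (shiftV k c) (shiftV k c)) D')"
    by (rule relD_map[OF CgrMtch(4)]) blast+
  ultimately show ?case using CgrMtch(2) by (simp add: par.CgrMtch)
next
  case (Init p p' b b' a a' n)
  then show ?case by (simp add: par.Init)
next
  case (StructMat t t' x)
  then show ?case by (simp add: par.StructMat)
next
  case (StructCmp t1 t1' t2 t2' t3 t3')
  then show ?case by (simp add: par.StructCmp)
next
  case (MatchBind b b' mu mu' a a' D D' x n)
  have "rel_option (fmrel (par bt)) (map_option (fmmap (shiftV k c)) mu) (map_option (fmmap (shiftV k c)) mu')"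
    by (rule relmu_map[OF MatchBind.IH(2)]) blast
  moreover have "rel_mset (rel_prod (par bt) (par bt)) (image_mset (map_prod (shiftV k c) (shiftV k c)) D)
     (image_mset (map_prod (shiftV k c) (shiftV k c)) D')"
    by (rule relD_map[OF MatchBind.IH(4)]) blast+
  ultimately show ?case using MatchBind.IH(1,3) MatchBind.hyps(3)
    using par.MatchBind[of bt "shiftV k (c+n) b" "shiftV k (c+n) b'" "map_option (fmmap (shiftV k c)) mu"
       "map_option (fmmap (shiftV k c)) mu'" "shiftV k c a" "shiftV k c a'"
       "image_mset (map_prod (shiftV k c) (shiftV k c)) D"
       "image_mset (map_prod (shiftV k c) (shiftV k c)) D'" x n]
    by (simp add: map_dunion)
next
  case (MatchMat b b' mu mu' D D' n x)
  have "rel_option (fmrel (par bt)) (map_option (fmmap (shiftV k c)) mu) (map_option (fmmap (shiftV k c)) mu')"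
    by (rule relmu_map[OF MatchMat.IH(2)]) blast
  moreover have "rel_mset (rel_prod (par bt) (par bt)) (image_mset (map_prod (shiftV k c) (shiftV k c)) D)
     (image_mset (map_prod (shiftV k c) (shiftV k c)) D')"
    by (rule relD_map[OF MatchMat.IH(3)]) blast+
  ultimately show ?case using MatchMat.IH(1) MatchMat.hyps(2)
    using par.MatchMat[of bt "shiftV k (c+n) b" "shiftV k (c+n) b'" "map_option (fmmap (shiftV k c)) mu"
       "map_option (fmmap (shiftV k c)) mu'" "image_mset (map_prod (shiftV k c) (shiftV k c)) D"
       "image_mset (map_prod (shiftV k c) (shiftV k c)) D'" n x]
    by simp
next
  case (MatchCmp b b' mu mu' D D' a1 a1' a2 a2' p1 p1' p2 p2' n)
  have "rel_option (fmrel (par bt)) (map_option (fmmap (shiftV k c)) mu) (map_option (fmmap (shiftV k c)) mu')"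
    by (rule relmu_map[OF MatchCmp.IH(2)]) blast
  moreover have "rel_mset (rel_prod (par bt) (par bt)) (image_mset (map_prod (shiftV k c) (shiftV k c)) D)
     (image_mset (map_prod (shiftV k c) (shiftV k c)) D')"
    by (rule relD_map[OF MatchCmp.IH(3)]) blast+
  ultimately show ?case using MatchCmp.IH(1,4,5,6,7)
    by (simp add: par.MatchCmp)
next
  case (MatchFail b b' D D' n a p mu)
  have "rel_mset (rel_prod (par bt) (par bt)) (image_mset (map_prod (shiftV k c) (shiftV k c)) D)
     (image_mset (map_prod (shiftV k c) (shiftV k c)) D')"
    by (rule relD_map[OF MatchFail.IH(2)]) blast+
  note r = par.MatchFail[OF MatchFail.IH(1)[of "c+n"] this fp_shiftV[OF MatchFail.hyps(2), of k c c], where mu="map_option (fmmap (shiftV k c)) mu"]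
  show ?case by (simp only: shiftV.simps image_mset_add_mset map_prod_simp option.map(1) r)
next
  case (ResOk b b' \<sigma> \<sigma>' n)
  have d: "fmdom' \<sigma>' = {..<n}" using fmrel_fmdom'_eq[OF ResOk.IH(2)] ResOk.hyps(2) by simp
  have "fmrel (par bt) (fmmap (shiftV k c) \<sigma>) (fmmap (shiftV k c) \<sigma>')"
    by (rule fmrel_map[OF ResOk.IH(2)]) blast
  then show ?case using ResOk.IH(1) ResOk.hyps(2) d
    by (simp add: shiftV_inst par.ResOk)
next
  case (ResDom \<sigma> n b)
  then show ?case using assms(2) by (simp add: closed_shiftV par.ResDom)
next
  case (ResBot b n D)
  show ?case using assms(2) by (simp add: closed_shiftV par.ResBot)
qed

lemma par_shiftM:
  assumes "par bt t t'" "pure_closed 0 0 bt"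
  shows "par bt (shiftM k c t) (shiftM k c t')"
  using assms(1)
proof (induction arbitrary: c rule: par.induct)
  case (Id t)
  then show ?case by (rule par.Id)
next
  case (CgrApp t1 t1' t2 t2')
  then show ?case by (simp add: par.CgrApp)
next
  case (CgrCmp t1 t1' t2 t2')
  then show ?case by (simp add: par.CgrCmp)
next
  case (CgrAbs p p' b b' n)
  then show ?case by (simp add: par.CgrAbs)
next
  case (CgrMtch b b' mu mu' D D' n)
  have "rel_option (fmrel (par bt)) (map_option (fmmap (shiftM k c)) mu) (map_option (fmmap (shiftM k c)) mu')"
    by (rule relmu_map[OF CgrMtch(3)]) blast
  moreover have "rel_mset (rel_prod (par bt) (par bt)) (image_mset (map_prod (shiftM k c) (shiftM k (c+n))) D)
     (image_mset (map_prod (shiftM k c) (shiftM k (c+n))) D')"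
    by (rule relD_map[OF CgrMtch(4)]) blast+
  ultimately show ?case using CgrMtch(2) by (simp add: par.CgrMtch)
next
  case (Init p p' b b' a a' n)
  then show ?case by (simp add: par.Init)
next
  case (StructMat t t' x)
  then show ?case by (simp add: par.StructMat)
next
  case (StructCmp t1 t1' t2 t2' t3 t3')
  then show ?case by (simp add: par.StructCmp)
next
  case (MatchBind b b' mu mu' a a' D D' x n)
  have "rel_option (fmrel (par bt)) (map_option (fmmap (shiftM k c)) mu) (map_option (fmmap (shiftM k c)) mu')"
    by (rule relmu_map[OF MatchBind.IH(2)]) blast
  moreover have "rel_mset (rel_prod (par bt) (par bt)) (image_mset (map_prod (shiftM k c) (shiftM k (c+n))) D)
     (image_mset (map_prod (shiftM k c) (shiftM k (c+n))) D')"
    by (rule relD_map[OF MatchBind.IH(4)]) blast+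
  ultimately show ?case using MatchBind.IH(1,3) MatchBind.hyps(3)
    using par.MatchBind[of bt "shiftM k c b" "shiftM k c b'" "map_option (fmmap (shiftM k c)) mu"
       "map_option (fmmap (shiftM k c)) mu'" "shiftM k c a" "shiftM k c a'"
       "image_mset (map_prod (shiftM k c) (shiftM k (c+n))) D"
       "image_mset (map_prod (shiftM k c) (shiftM k (c+n))) D'" x n]
    by (simp add: map_dunion)
next
  case (MatchMat b b' mu mu' D D' n x)
  define x' where "x' = (if x < c + n then x else x + k)"
  have e1: "shiftM k c (Mat (x - n)) = Mat (x' - n)" and e2: "shiftM k (c + n) (Mat x) = Mat x'"
    and nx: "n \<le> x'"
    using MatchMat.hyps(2) by (auto simp: x'_def)
  have mu: "rel_option (fmrel (par bt)) (map_option (fmmap (shiftM k c)) mu) (map_option (fmmap (shiftM k c)) mu')"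
    by (rule relmu_map[OF MatchMat.IH(2)]) blast
  have DD: "rel_mset (rel_prod (par bt) (par bt)) (image_mset (map_prod (shiftM k c) (shiftM k (c+n))) D)
     (image_mset (map_prod (shiftM k c) (shiftM k (c+n))) D')"
    by (rule relD_map[OF MatchMat.IH(3)]) blast+
  have "par bt (Mtch (shiftM k c b) n (map_option (fmmap (shiftM k c)) mu)
     (add_mset (Mat (x' - n), Mat x') (image_mset (map_prod (shiftM k c) (shiftM k (c+n))) D)))
     (Mtch (shiftM k c b') n (map_option (fmmap (shiftM k c)) mu') (image_mset (map_prod (shiftM k c) (shiftM k (c+n))) D'))"
    by (rule par.MatchMat[OF MatchMat.IH(1)[of c] mu DD nx])
  then show ?case by (simp only: shiftM.simps(6) image_mset_add_mset map_prod_simp e1 e2)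
next
  case (MatchCmp b b' mu mu' D D' a1 a1' a2 a2' p1 p1' p2 p2' n)
  have "rel_option (fmrel (par bt)) (map_option (fmmap (shiftM k c)) mu) (map_option (fmmap (shiftM k c)) mu')"
    by (rule relmu_map[OF MatchCmp.IH(2)]) blast
  moreover have "rel_mset (rel_prod (par bt) (par bt)) (image_mset (map_prod (shiftM k c) (shiftM k (c+n))) D)
     (image_mset (map_prod (shiftM k c) (shiftM k (c+n))) D')"
    by (rule relD_map[OF MatchCmp.IH(3)]) blast+
  ultimately show ?case using MatchCmp.IH(1,4,5,6,7)
    by (simp add: par.MatchCmp)
next
  case (MatchFail b b' D D' n a p mu)
  have "rel_mset (rel_prod (par bt) (par bt)) (image_mset (map_prod (shiftM k c) (shiftM k (c+n))) D)
     (image_mset (map_prod (shiftM k c) (shiftM k (c+n))) D')"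
    by (rule relD_map[OF MatchFail.IH(2)]) blast+
  note r = par.MatchFail[OF MatchFail.IH(1)[of c] this fp_shiftM[OF MatchFail.hyps(2), of k c], where mu="map_option (fmmap (shiftM k c)) mu"]
  show ?case by (simp only: shiftM.simps image_mset_add_mset map_prod_simp option.map(1) r)
next
  case (ResOk b b' \<sigma> \<sigma>' n)
  have d: "fmdom' \<sigma>' = {..<n}" using fmrel_fmdom'_eq[OF ResOk.IH(2)] ResOk.hyps(2) by simp
  have "fmrel (par bt) (fmmap (shiftM k c) \<sigma>) (fmmap (shiftM k c) \<sigma>')"
    by (rule fmrel_map[OF ResOk.IH(2)]) blast
  then show ?case using ResOk.IH(1) ResOk.hyps(2) d
    by (simp add: shiftM_inst par.ResOk)
next
  case (ResDom \<sigma> n b)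
  then show ?case using assms(2) by (simp add: closed_shiftM par.ResDom)
next
  case (ResBot b n D)
  show ?case using assms(2) by (simp add: closed_shiftM par.ResBot)
qed



lemma par_substV_refl:
  assumes ss: "\<And>i. i < m \<Longrightarrow> par bt (s i) (s' i)" and cl: "pure_closed 0 0 bt"
  shows "par bt (substV cv cm m s t) (substV cv cm m s' t)"
proof (induction t arbitrary: cv cm)
  case (Var x)
  have "\<And>i. i < m \<Longrightarrow> par bt (shiftM cm 0 (shiftV cv 0 (s i))) (shiftM cm 0 (shiftV cv 0 (s' i)))"
    by (rule par_shiftM[OF par_shiftV[OF ss cl] cl])
  then show ?case by (simp add: par.Id)
next
  case (Mat x)
  then show ?case by (simp add: par.Id)
next
  case (App t1 t2)
  then show ?case by (simp add: par.CgrApp)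
next
  case (Cmp t1 t2)
  then show ?case by (simp add: par.CgrCmp)
next
  case (Abs n p b)
  then show ?case by (simp add: par.CgrAbs)
next
  case (Mtch b n mu D)
  have mu: "rel_option (fmrel (par bt)) (map_option (fmmap (substV cv cm m s)) mu) (map_option (fmmap (substV cv cm m s')) mu)"
    unfolding option.rel_map fmap.rel_map
    apply (rule option.rel_refl_strong)
    apply (rule fmap.rel_refl_strong)
    using Mtch.IH(2) by blast
  have DD: "rel_mset (rel_prod (par bt) (par bt)) (image_mset (map_prod (substV cv cm m s) (substV cv (cm + n) m s)) D)
     (image_mset (map_prod (substV cv cm m s') (substV cv (cm + n) m s')) D)"
    unfolding multiset.rel_map
    apply (rule multiset.rel_refl_strong)
    subgoal for z
      apply (cases z)
      using Mtch.IH(3,4) by auto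
    done
  show ?case using Mtch.IH(1) mu DD by (simp add: par.CgrMtch)
qed


lemma par_substV:
  assumes "par bt t t'" and ss: "\<And>i. i < m \<Longrightarrow> par bt (s i) (s' i)" and cl: "pure_closed 0 0 bt"
  shows "par bt (substV cv cm m s t) (substV cv cm m s' t')"
  using assms(1)
proof (induction arbitrary: cv cm rule: par.induct)
  case (Id t)
  then show ?case by (rule par_substV_refl[OF ss cl])
next
  case (CgrApp t1 t1' t2 t2')
  then show ?case by (simp add: par.CgrApp)
next
  case (CgrCmp t1 t1' t2 t2')
  then show ?case by (simp add: par.CgrCmp)
next
  case (CgrAbs p p' b b' n)
  then show ?case by (simp add: par.CgrAbs)
next
  case (CgrMtch b b' mu mu' D D' n)
  have mu: "rel_option (fmrel (par bt)) (map_option (fmmap (substV cv cm m s)) mu) (map_option (fmmap (substV cv cm m s')) mu')"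
    by (rule relmu_map[OF CgrMtch.IH(2)]) blast
  have DD: "rel_mset (rel_prod (par bt) (par bt)) (image_mset (map_prod (substV cv cm m s) (substV cv (cm+n) m s)) D)
     (image_mset (map_prod (substV cv cm m s') (substV cv (cm+n) m s')) D')"
    by (rule relD_map[OF CgrMtch.IH(3)]) blast+
  show ?case using CgrMtch.IH(1) mu DD by (simp add: par.CgrMtch)
next
  case (Init p p' b b' a a' n)
  then show ?case by (simp add: par.Init)
next
  case (StructMat t t' x)
  then show ?case by (simp add: par.StructMat)
next
  case (StructCmp t1 t1' t2 t2' t3 t3')
  then show ?case by (simp add: par.StructCmp)
next
  case (MatchBind b b' mu mu' a a' D D' x n)
  have mu: "rel_option (fmrel (par bt)) (map_option (fmmap (substV cv cm m s)) mu) (map_option (fmmap (substV cv cm m s')) mu')"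
    by (rule relmu_map[OF MatchBind.IH(2)]) blast
  have DD: "rel_mset (rel_prod (par bt) (par bt)) (image_mset (map_prod (substV cv cm m s) (substV cv (cm+n) m s)) D)
     (image_mset (map_prod (substV cv cm m s') (substV cv (cm+n) m s')) D')"
    by (rule relD_map[OF MatchBind.IH(4)]) blast+
  note r = par.MatchBind[OF MatchBind.IH(1)[of "cv+n" cm] mu MatchBind.IH(3)[of cv cm] DD MatchBind.hyps(3)]
  show ?case using r by (simp add: map_dunion)
next
  case (MatchMat b b' mu mu' D D' n x)
  have mu: "rel_option (fmrel (par bt)) (map_option (fmmap (substV cv cm m s)) mu) (map_option (fmmap (substV cv cm m s')) mu')"
    by (rule relmu_map[OF MatchMat.IH(2)]) blast
  have DD: "rel_mset (rel_prod (par bt) (par bt)) (image_mset (map_prod (substV cv cm m s) (substV cv (cm+n) m s)) D)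
     (image_mset (map_prod (substV cv cm m s') (substV cv (cm+n) m s')) D')"
    by (rule relD_map[OF MatchMat.IH(3)]) blast+
  note r = par.MatchMat[OF MatchMat.IH(1)[of "cv+n" cm] mu DD MatchMat.hyps(2)]
  show ?case using r by (simp only: substV.simps(2,6) image_mset_add_mset map_prod_simp)
next
  case (MatchCmp b b' mu mu' D D' a1 a1' a2 a2' p1 p1' p2 p2' n)
  have mu: "rel_option (fmrel (par bt)) (map_option (fmmap (substV cv cm m s)) mu) (map_option (fmmap (substV cv cm m s')) mu')"
    by (rule relmu_map[OF MatchCmp.IH(2)]) blast
  have DD: "rel_mset (rel_prod (par bt) (par bt)) (image_mset (map_prod (substV cv cm m s) (substV cv (cm+n) m s)) D)
     (image_mset (map_prod (substV cv cm m s') (substV cv (cm+n) m s')) D')"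
    by (rule relD_map[OF MatchCmp.IH(3)]) blast+
  note r = par.MatchCmp[OF MatchCmp.IH(1)[of "cv+n" cm] mu DD MatchCmp.IH(4)[of cv cm] MatchCmp.IH(5)[of cv cm]
     MatchCmp.IH(6)[of cv "cm+n"] MatchCmp.IH(7)[of cv "cm+n"]]
  show ?case using r by (simp only: substV.simps(4,6) image_mset_add_mset map_prod_simp)
next
  case (MatchFail b b' D D' n a p mu)
  have DD: "rel_mset (rel_prod (par bt) (par bt)) (image_mset (map_prod (substV cv cm m s) (substV cv (cm+n) m s)) D)
     (image_mset (map_prod (substV cv cm m s') (substV cv (cm+n) m s')) D')"
    by (rule relD_map[OF MatchFail.IH(2)]) blast+
  note r = par.MatchFail[OF MatchFail.IH(1)[of "cv+n" cm] DD fp_substV[OF MatchFail.hyps(2), of cv cm m s "cm+n"],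
      where mu="map_option (fmmap (substV cv cm m s)) mu"]
  show ?case using r by (simp only: substV.simps(6) image_mset_add_mset map_prod_simp option.map(1))
next
  case (ResOk b b' \<sigma> \<sigma>' n)
  have d: "fmdom' \<sigma>' = {..<n}" using fmrel_fmdom'_eq[OF ResOk.IH(2)] ResOk.hyps(2) by simp
  have "fmrel (par bt) (fmmap (substV cv cm m s) \<sigma>) (fmmap (substV cv cm m s') \<sigma>')"
    by (rule fmrel_map[OF ResOk.IH(2)]) blast
  note r = par.ResOk[OF ResOk.IH(1)[of "cv+n" cm] this, of n]
  show ?case using r ResOk.hyps(2) d by (simp add: substV_inst)
next
  case (ResDom \<sigma> n b)
  then show ?case using cl by (simp add: closed_substV par.ResDom)
next
  case (ResBot b n D)
  show ?case using cl by (simp add: closed_substV par.ResBot)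
qed


lemma par_inst:
  assumes "par bt b b'" "fmrel (par bt) \<sigma> \<sigma>'" "fmdom' \<sigma> = {..<n}" "pure_closed 0 0 bt"
  shows "par bt (inst n \<sigma> b) (inst n \<sigma>' b')"
  unfolding inst_def
proof (rule par_substV[OF assms(1) _ assms(4)])
  fix i assume "i < n"
  then have "i \<in> fmdom' \<sigma>" using assms(3) by simp
  then obtain v where v: "fmlookup \<sigma> i = Some v" by (meson fmlookup_dom'_iff)
  have "rel_option (par bt) (fmlookup \<sigma> i) (fmlookup \<sigma>' i)" using assms(2) fmrel_iff by metis
  then show "par bt (the (fmlookup \<sigma> i)) (the (fmlookup \<sigma>' i))" using v
    by (cases "fmlookup \<sigma>' i") auto
qed



definition DP :: "trm \<Rightarrow> trm \<Rightarrow> bool" where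
  "DP bt t \<longleftrightarrow> (\<forall>t1 t2. par bt t t1 \<longrightarrow> par bt t t2 \<longrightarrow> (\<exists>t3. par bt t1 t3 \<and> par bt t2 t3))"

lemma DPD: "DP bt t \<Longrightarrow> par bt t t1 \<Longrightarrow> par bt t t2 \<Longrightarrow> \<exists>t3. par bt t1 t3 \<and> par bt t2 t3"
  unfolding DP_def by blast

lemma conf_le: "(\<lambda>x y. par bt x y \<and> DP bt x)\<inverse>\<inverse> OO (\<lambda>x y. par bt x y \<and> DP bt x) \<le> par bt OO (par bt)\<inverse>\<inverse>"
  by (auto dest: DPD)

lemma fmrel_diamond:
  assumes "fmrel (par bt) m m1" "fmrel (par bt) m m2" "\<And>x. x \<in> fmran' m \<Longrightarrow> DP bt x"
  shows "\<exists>m3. fmrel (par bt) m1 m3 \<and> fmrel (par bt) m2 m3"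
proof -
  let ?R = "\<lambda>x y. par bt x y \<and> DP bt x"
  have r1: "fmrel ?R m m1" using assms(1,3) by (auto elim!: fmap.rel_mono_strong)
  have r2: "fmrel ?R m m2" using assms(2,3) by (auto elim!: fmap.rel_mono_strong)
  have "(fmrel ?R\<inverse>\<inverse> OO fmrel ?R) m1 m2" using r1 r2 by (auto simp: fmap.rel_conversep)
  then have "fmrel (?R\<inverse>\<inverse> OO ?R) m1 m2" by (simp add: fmap.rel_compp)
  then have "fmrel (par bt OO (par bt)\<inverse>\<inverse>) m1 m2" using fmap.rel_mono[OF conf_le] by blast
  then have "(fmrel (par bt) OO fmrel (par bt)\<inverse>\<inverse>) m1 m2" by (simp add: fmap.rel_compp)
  then show ?thesis by (auto simp: fmap.rel_conversep)
qed

lemma mu_diamond: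
  assumes "rel_option (fmrel (par bt)) m m1" "rel_option (fmrel (par bt)) m m2"
    "\<And>\<sigma> x. m = Some \<sigma> \<Longrightarrow> x \<in> fmran' \<sigma> \<Longrightarrow> DP bt x"
  shows "\<exists>m3. rel_option (fmrel (par bt)) m1 m3 \<and> rel_option (fmrel (par bt)) m2 m3"
proof (cases m)
  case None
  then show ?thesis using assms by auto
next
  case (Some \<sigma>)
  then obtain \<sigma>1 \<sigma>2 where "m1 = Some \<sigma>1" "m2 = Some \<sigma>2" "fmrel (par bt) \<sigma> \<sigma>1" "fmrel (par bt) \<sigma> \<sigma>2"
    using assms(1,2) by (cases m1; cases m2) auto
  moreover obtain \<sigma>3 where "fmrel (par bt) \<sigma>1 \<sigma>3" "fmrel (par bt) \<sigma>2 \<sigma>3"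
    using fmrel_diamond[OF calculation(3,4)] assms(3) Some by blast
  ultimately show ?thesis by (intro exI[where x="Some \<sigma>3"]) auto
qed

definition DPP :: "trm \<Rightarrow> trm \<times> trm \<Rightarrow> bool" where
  "DPP bt P \<longleftrightarrow> DP bt (fst P) \<and> DP bt (snd P)"

lemma confP_le: "(\<lambda>x y. rel_prod (par bt) (par bt) x y \<and> DPP bt x)\<inverse>\<inverse> OO (\<lambda>x y. rel_prod (par bt) (par bt) x y \<and> DPP bt x)
   \<le> rel_prod (par bt) (par bt) OO (rel_prod (par bt) (par bt))\<inverse>\<inverse>"
proof (intro predicate2I)
  fix x y assume "((\<lambda>x y. rel_prod (par bt) (par bt) x y \<and> DPP bt x)\<inverse>\<inverse> OO (\<lambda>x y. rel_prod (par bt) (par bt) x y \<and> DPP bt x)) x y"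
  then obtain z where z: "rel_prod (par bt) (par bt) z x" "rel_prod (par bt) (par bt) z y" "DPP bt z" by auto
  obtain z1 z2 x1 x2 y1 y2 where e: "z = (z1, z2)" "x = (x1, x2)" "y = (y1, y2)" by (cases z; cases x; cases y)
  obtain u1 where "par bt x1 u1" "par bt y1 u1" using DPD[of bt z1 x1 y1] z e by (auto simp: DPP_def)
  moreover obtain u2 where "par bt x2 u2" "par bt y2 u2" using DPD[of bt z2 x2 y2] z e by (auto simp: DPP_def)
  ultimately show "(rel_prod (par bt) (par bt) OO (rel_prod (par bt) (par bt))\<inverse>\<inverse>) x y"
    using e by (auto intro!: relcomppI[where b="(u1, u2)"])
qed

lemma D_diamond:
  assumes "rel_mset (rel_prod (par bt) (par bt)) m m1" "rel_mset (rel_prod (par bt) (par bt)) m m2"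
     "\<And>x. x \<in># m \<Longrightarrow> DPP bt x"
  shows "\<exists>m3. rel_mset (rel_prod (par bt) (par bt)) m1 m3 \<and> rel_mset (rel_prod (par bt) (par bt)) m2 m3"
proof -
  let ?R = "\<lambda>x y. rel_prod (par bt) (par bt) x y \<and> DPP bt x"
  have r1: "rel_mset ?R m m1" using assms(1,3) by (auto elim!: multiset.rel_mono_strong)
  have r2: "rel_mset ?R m m2" using assms(2,3) by (auto elim!: multiset.rel_mono_strong)
  have "(rel_mset ?R\<inverse>\<inverse> OO rel_mset ?R) m1 m2" using r1 r2 by (auto simp: multiset.rel_conversep)
  then have "rel_mset (?R\<inverse>\<inverse> OO ?R) m1 m2" by (simp add: multiset.rel_compp)
  then have "rel_mset (rel_prod (par bt) (par bt) OO (rel_prod (par bt) (par bt))\<inverse>\<inverse>) m1 m2"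
    using multiset.rel_mono[OF confP_le] by blast
  then have "(rel_mset (rel_prod (par bt) (par bt)) OO rel_mset (rel_prod (par bt) (par bt))\<inverse>\<inverse>) m1 m2"
    by (simp add: multiset.rel_compp)
  then show ?thesis by (auto simp: multiset.rel_conversep)
qed


lemma inv_Var: "par bt (Var x) t \<Longrightarrow> t = Var x"
  by (erule par.cases) auto
lemma inv_Mat: "par bt (Mat x) t \<Longrightarrow> t = Mat x"
  by (erule par.cases) auto
lemma inv_Cmp: "par bt (Cmp a b) t \<Longrightarrow> \<exists>a' b'. t = Cmp a' b' \<and> par bt a a' \<and> par bt b b'"
  by (erule par.cases) (auto intro: par.Id)
lemma inv_Abs: "par bt (Abs n p b) t \<Longrightarrow> \<exists>p' b'. t = Abs n p' b' \<and> par bt p p' \<and> par bt b b'"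
  by (erule par.cases) (auto intro: par.Id)
lemma inv_App: "par bt (App u v) t \<Longrightarrow>
   (\<exists>u' v'. t = App u' v' \<and> par bt u u' \<and> par bt v v') \<or>
   (\<exists>n p b p' b' v'. u = Abs n p b \<and> t = Mtch b' n (Some fmempty) {#(v', p')#} \<and> par bt p p' \<and> par bt b b' \<and> par bt v v') \<or>
   (\<exists>x v'. u = Mat x \<and> t = Cmp (Mat x) v' \<and> par bt v v') \<or>
   (\<exists>u1 u2 u1' u2' v'. u = Cmp u1 u2 \<and> t = Cmp (Cmp u1' u2') v' \<and> par bt u1 u1' \<and> par bt u2 u2' \<and> par bt v v')"
  by (erule par.cases) (auto intro: par.Id)

lemma fp_par: "failure_pair n (a, p) \<Longrightarrow> par bt a a1 \<Longrightarrow> par bt p p1 \<Longrightarrow> failure_pair n (a1, p1)"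
  by (cases "(n, (a, p))" rule: failure_pair.cases) (auto dest!: inv_Mat inv_Cmp inv_Abs)

lemma fp_bind: "x < n \<Longrightarrow> \<not> failure_pair n (a, Mat x)"
  by (cases "(n, (a, Mat x))" rule: failure_pair.cases) auto
lemma fp_mat: "n \<le> x \<Longrightarrow> \<not> failure_pair n (Mat (x - n), Mat x)"
  by simp
lemma fp_cmp: "\<not> failure_pair n (Cmp a1 a2, Cmp p1 p2)"
  by simp

inductive pstep :: "trm \<Rightarrow> nat \<Rightarrow> trm \<times> trm \<Rightarrow> ((nat, trm) fmap option \<Rightarrow> (nat, trm) fmap option) \<Rightarrow> (trm \<times> trm) multiset \<Rightarrow> bool"
  for bt :: trm where
  ps_bind: "par bt a a' \<Longrightarrow> x < n \<Longrightarrow> pstep bt n (a, Mat x) (\<lambda>m. dunion m (Some (fmupd x a' fmempty))) {#}"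
| ps_mat: "n \<le> x \<Longrightarrow> pstep bt n (Mat (x - n), Mat x) id {#}"
| ps_cmp: "par bt a1 a1' \<Longrightarrow> par bt a2 a2' \<Longrightarrow> par bt p1 p1' \<Longrightarrow> par bt p2 p2' \<Longrightarrow>
     pstep bt n (Cmp a1 a2, Cmp p1 p2) id {#(a1', p1'), (a2', p2')#}"
| ps_fail: "failure_pair n P \<Longrightarrow> pstep bt n P (\<lambda>m. None) {#}"

abbreviation "RM bt \<equiv> rel_option (fmrel (par bt))"
abbreviation "RD bt \<equiv> rel_mset (rel_prod (par bt) (par bt))"

inductive mred :: "trm \<Rightarrow> nat \<Rightarrow> (nat, trm) fmap option \<times> (trm \<times> trm) multiset \<Rightarrow> (nat, trm) fmap option \<times> (trm \<times> trm) multiset \<Rightarrow> bool"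
  for bt :: trm where
  mr_cgr: "RM bt mu mu' \<Longrightarrow> RD bt D D' \<Longrightarrow> mred bt n (mu, D) (mu', D')"
| mr_step: "pstep bt n P f N \<Longrightarrow> RM bt mu mu' \<Longrightarrow> RD bt D D' \<Longrightarrow> mred bt n (mu, add_mset P D) (f mu', N + D')"

lemma mred_par:
  assumes b: "par bt b b'" and m: "mred bt n (mu, D) (mu2, D2)"
  shows "par bt (Mtch b n mu D) (Mtch b' n mu2 D2)"
  using m
proof cases
  case mr_cgr
  then show ?thesis using b by (auto intro: par.CgrMtch)
next
  case (mr_step P f N mu' D0 D')
  from \<open>pstep bt n P f N\<close> show ?thesis
  proof cases
    case (ps_bind a a' x)
    then show ?thesis using mr_step b by (auto intro: par.MatchBind)
  next
    case (ps_mat x)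
    then show ?thesis using mr_step b by (auto intro: par.MatchMat)
  next
    case (ps_cmp a1 a1' a2 a2' p1 p1' p2 p2')
    then show ?thesis using mr_step b par.MatchCmp[of bt b b' mu mu' D0 D' a1 a1' a2 a2' p1 p1' p2 p2' n] by auto
  next
    case ps_fail
    then show ?thesis using mr_step b par.MatchFail[of bt b b' D0 D' n "fst P" "snd P" mu] by auto
  qed
qed


lemma pstep_None: "pstep bt n P f N \<Longrightarrow> f None = None"
  by (erule pstep.cases) (auto simp: dunion_def)

lemma dunion_comm3: "dunion (dunion m (Some A)) (Some B) = dunion (dunion m (Some B)) (Some A)"
proof (cases m)
  case None
  then show ?thesis by (simp add: dunion_def)
next
  case (Some s)
  show ?thesis
  proof (cases "fmdom' s \<inter> fmdom' A = {} \<and> fmdom' s \<inter> fmdom' B = {} \<and> fmdom' A \<inter> fmdom' B = {}")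
    case True
    have "s ++\<^sub>f A ++\<^sub>f B = s ++\<^sub>f B ++\<^sub>f A"
    proof (rule fmap_ext)
      fix x show "fmlookup (s ++\<^sub>f A ++\<^sub>f B) x = fmlookup (s ++\<^sub>f B ++\<^sub>f A) x"
        using True by (auto simp: fmdom'_alt_def)
    qed
    then show ?thesis using Some True by (auto simp: dunion_def)
  next
    case False
    then show ?thesis using Some by (auto simp: dunion_def)
  qed
qed

lemma dunion_rel: "RM bt m m' \<Longrightarrow> par bt a a' \<Longrightarrow>
  RM bt (dunion m (Some (fmupd x a fmempty))) (dunion m' (Some (fmupd x a' fmempty)))"
proof (cases m)
  case None
  assume "RM bt m m'" then show ?thesis using None by (auto simp: dunion_def)
next
  case (Some s)
  assume r: "RM bt m m'" and a: "par bt a a'"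
  then obtain s' where s': "m' = Some s'" "fmrel (par bt) s s'" using Some by (cases m') auto
  have d: "fmdom' s = fmdom' s'" using s'(2) by (rule fmrel_fmdom'_eq)
  have "fmrel (par bt) (s ++\<^sub>f fmupd x a fmempty) (s' ++\<^sub>f fmupd x a' fmempty)"
    using s'(2) a by (intro fmrel_addI fmrel_upd) (auto intro: fmap.rel_refl)
  then show ?thesis using Some s' d by (auto simp: dunion_def)
qed

lemma dunion_None[simp]: "dunion None m = None"
  by (simp add: dunion_def)

lemma pstep_comm: "pstep bt n P f N \<Longrightarrow> pstep bt n Q g M \<Longrightarrow> f (g m) = g (f m)"
  by (erule pstep.cases; erule pstep.cases) (auto simp: dunion_comm3)

definition compat :: "trm \<Rightarrow> ((nat, trm) fmap option \<Rightarrow> (nat, trm) fmap option) \<Rightarrow> ((nat, trm) fmap option \<Rightarrow> (nat, trm) fmap option) \<Rightarrow> bool" where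
  "compat bt f g \<longleftrightarrow> (\<forall>m m'. RM bt m m' \<longrightarrow> RM bt (f m) (g m'))"

definition goodP :: "trm \<Rightarrow> trm \<times> trm \<Rightarrow> bool" where
  "goodP bt P \<longleftrightarrow> DP bt (fst P) \<and> DP bt (snd P) \<and>
     (\<forall>a1 a2 p1 p2. P = (Cmp a1 a2, Cmp p1 p2) \<longrightarrow> DP bt a1 \<and> DP bt a2 \<and> DP bt p1 \<and> DP bt p2)"


lemma RD_two: "par bt a a' \<Longrightarrow> par bt p p' \<Longrightarrow> par bt b b' \<Longrightarrow> par bt q q' \<Longrightarrow>
  RD bt {#(a, p), (b, q)#} {#(a', p'), (b', q')#}"
  by (auto intro!: rel_mset_Plus rel_mset_Zero)

lemma compat_id: "compat bt id id" by (simp add: compat_def)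
lemma compat_None: "compat bt (\<lambda>m. None) (\<lambda>m. None)" by (simp add: compat_def)
lemma compat_bind: "par bt a a' \<Longrightarrow> compat bt (\<lambda>m. dunion m (Some (fmupd x a fmempty))) (\<lambda>m. dunion m (Some (fmupd x a' fmempty)))"
  by (simp add: compat_def dunion_rel)

lemma pstep_cgr:
  assumes "pstep bt n P f N" "rel_prod (par bt) (par bt) P P1" "goodP bt P"
  shows "\<exists>f' N'. pstep bt n P1 f' N' \<and> RD bt N N' \<and> compat bt f f'"
  using assms(1)
proof cases
  case (ps_bind a a' x)
  obtain a1 p1 where P1: "P1 = (a1, p1)" by (cases P1)
  have a1: "par bt a a1" and p1: "p1 = Mat x" using assms(2) ps_bind P1 by (auto dest: inv_Mat)
  obtain a3 where "par bt a' a3" "par bt a1 a3" using DPD[of bt a a' a1] assms(3) ps_bind a1 by (auto simp: goodP_def)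
  then show ?thesis using ps_bind P1 p1
    by (intro exI[where x="\<lambda>m. dunion m (Some (fmupd x a3 fmempty))"] exI[where x="{#}"])
       (auto intro: pstep.ps_bind compat_bind)
next
  case (ps_mat x)
  then have "P1 = P" using assms(2) by (cases P1) (auto dest: inv_Mat)
  then show ?thesis using ps_mat by (auto intro: pstep.ps_mat compat_id)
next
  case (ps_cmp a1 a1' a2 a2' p1 p1' p2 p2')
  obtain b1 b2 q1 q2 where P1: "P1 = (Cmp b1 b2, Cmp q1 q2)" and r: "par bt a1 b1" "par bt a2 b2" "par bt p1 q1" "par bt p2 q2"
    using assms(2) ps_cmp by (cases P1) (auto dest!: inv_Cmp)
  have g: "DP bt a1" "DP bt a2" "DP bt p1" "DP bt p2" using assms(3) ps_cmp by (auto simp: goodP_def)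
  obtain c1 where c1: "par bt a1' c1" "par bt b1 c1" using DPD[OF g(1) ps_cmp(4) r(1)] by blast
  obtain c2 where c2: "par bt a2' c2" "par bt b2 c2" using DPD[OF g(2) ps_cmp(5) r(2)] by blast
  obtain d1 where d1: "par bt p1' d1" "par bt q1 d1" using DPD[OF g(3) ps_cmp(6) r(3)] by blast
  obtain d2 where d2: "par bt p2' d2" "par bt q2 d2" using DPD[OF g(4) ps_cmp(7) r(4)] by blast
  show ?thesis
    using ps_cmp P1 c1 c2 d1 d2
    by (intro exI[where x=id] exI[where x="{#(c1, d1), (c2, d2)#}"])
       (auto intro: pstep.ps_cmp compat_id RD_two)
next
  case ps_fail
  obtain a p a1 p1 where e: "P = (a, p)" "P1 = (a1, p1)" by (cases P; cases P1)
  have "failure_pair n P1" using ps_fail assms(2) e fp_par by auto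
  then show ?thesis using ps_fail by (auto intro: pstep.ps_fail compat_None)
qed


lemma pstep_diamond:
  assumes "pstep bt n P f1 N1" "pstep bt n P f2 N2" "goodP bt P"
  shows "\<exists>f3 N3. compat bt f1 f3 \<and> compat bt f2 f3 \<and> RD bt N1 N3 \<and> RD bt N2 N3"
  using assms(1)
proof cases
  case (ps_bind a a' x)
  from assms(2) show ?thesis
  proof cases
    case (ps_bind b b' y)
    with \<open>P = (a, Mat x)\<close> have e: "b = a" "y = x" by auto
    obtain a3 where "par bt a' a3" "par bt b' a3" using DPD[of bt a a' b'] assms(3) ps_bind e
        \<open>par bt a a'\<close> \<open>P = (a, Mat x)\<close> by (auto simp: goodP_def)
    then show ?thesis using ps_bind e \<open>f1 = _\<close> \<open>N1 = _\<close>
      by (intro exI[where x="\<lambda>m. dunion m (Some (fmupd x a3 fmempty))"] exI[where x="{#}"])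
         (auto intro: compat_bind)
  next
    case (ps_mat y)
    then show ?thesis using \<open>P = (a, Mat x)\<close> \<open>x < n\<close> by auto
  next
    case (ps_cmp)
    then show ?thesis using \<open>P = (a, Mat x)\<close> by auto
  next
    case ps_fail
    then show ?thesis using \<open>P = (a, Mat x)\<close> \<open>x < n\<close> fp_bind by auto
  qed
next
  case (ps_mat x)
  from assms(2) show ?thesis
  proof cases
    case (ps_bind b b' y)
    then show ?thesis using \<open>P = (Mat (x - n), Mat x)\<close> \<open>n \<le> x\<close> by auto
  next
    case (ps_mat y)
    then show ?thesis using \<open>f1 = id\<close> \<open>N1 = {#}\<close> by (auto intro: compat_id)
  next
    case (ps_cmp)
    then show ?thesis using \<open>P = (Mat (x - n), Mat x)\<close> by auto
  next
    case ps_fail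
    then show ?thesis using \<open>P = (Mat (x - n), Mat x)\<close> \<open>n \<le> x\<close> by auto
  qed
next
  case (ps_cmp a1 a1' a2 a2' p1 p1' p2 p2')
  have g: "DP bt a1" "DP bt a2" "DP bt p1" "DP bt p2" using assms(3) ps_cmp by (auto simp: goodP_def)
  from assms(2) show ?thesis
  proof cases
    case (ps_bind b b' y)
    then show ?thesis using \<open>P = (Cmp a1 a2, Cmp p1 p2)\<close> by auto
  next
    case (ps_mat y)
    then show ?thesis using \<open>P = (Cmp a1 a2, Cmp p1 p2)\<close> by auto
  next
    case (ps_cmp b1 b1' b2 b2' q1 q1' q2 q2')
    with \<open>P = (Cmp a1 a2, Cmp p1 p2)\<close> have e: "b1 = a1" "b2 = a2" "q1 = p1" "q2 = p2" by auto
    obtain c1 where c1: "par bt a1' c1" "par bt b1' c1" using DPD[OF g(1) \<open>par bt a1 a1'\<close>] ps_cmp e by blast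
    obtain c2 where c2: "par bt a2' c2" "par bt b2' c2" using DPD[OF g(2) \<open>par bt a2 a2'\<close>] ps_cmp e by blast
    obtain d1 where d1: "par bt p1' d1" "par bt q1' d1" using DPD[OF g(3) \<open>par bt p1 p1'\<close>] ps_cmp e by blast
    obtain d2 where d2: "par bt p2' d2" "par bt q2' d2" using DPD[OF g(4) \<open>par bt p2 p2'\<close>] ps_cmp e by blast
    show ?thesis using ps_cmp \<open>f1 = id\<close> \<open>N1 = _\<close> c1 c2 d1 d2
      by (intro exI[where x=id] exI[where x="{#(c1, d1), (c2, d2)#}"])
         (auto intro: compat_id RD_two)
  next
    case ps_fail
    then show ?thesis using \<open>P = (Cmp a1 a2, Cmp p1 p2)\<close> by auto
  qed
next
  case ps_fail
  from assms(2) show ?thesis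
  proof cases
    case (ps_bind b b' y)
    then show ?thesis using \<open>failure_pair n P\<close> fp_bind by auto
  next
    case (ps_mat y)
    then show ?thesis using \<open>failure_pair n P\<close> by auto
  next
    case (ps_cmp)
    then show ?thesis using \<open>failure_pair n P\<close> by auto
  next
    case ps_fail
    then show ?thesis using \<open>f1 = _\<close> \<open>N1 = {#}\<close> by (auto intro: compat_None)
  qed
qed


lemma rel_mset_plus: "rel_mset R A A' \<Longrightarrow> rel_mset R B B' \<Longrightarrow> rel_mset R (A + B) (A' + B')"
  by (induction rule: rel_mset_induct) (auto intro: rel_mset_Plus)

lemma mr_cgr': "RM bt mu mu' \<Longrightarrow> RD bt D D' \<Longrightarrow> X = (mu, D) \<Longrightarrow> Y = (mu', D') \<Longrightarrow> mred bt n X Y"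
  by (simp add: mr_cgr)
lemma mr_step': "pstep bt n P f N \<Longrightarrow> RM bt mu mu' \<Longrightarrow> RD bt D D' \<Longrightarrow> X = (mu, add_mset P D) \<Longrightarrow>
   Y = (f mu', N + D') \<Longrightarrow> mred bt n X Y"
  by (simp add: mr_step)

lemma goodP_DPP: "goodP bt P \<Longrightarrow> DPP bt P"
  by (simp add: goodP_def DPP_def)

lemma mred_cgr_step:
  assumes "RM bt mu mu1" "RD bt D D1"
    and "pstep bt n P f N" "RM bt mu mu'" "RD bt D0 D0'" "D = add_mset P D0"
    and gm: "\<And>\<sigma> x. mu = Some \<sigma> \<Longrightarrow> x \<in> fmran' \<sigma> \<Longrightarrow> DP bt x" and gd: "\<And>P. P \<in># D \<Longrightarrow> goodP bt P"
  shows "\<exists>X3. mred bt n (mu1, D1) X3 \<and> mred bt n (f mu', N + D0') X3"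
proof -
  obtain P1 D01 where D1: "D1 = add_mset P1 D01" and PP: "rel_prod (par bt) (par bt) P P1" and DD: "RD bt D0 D01"
    using msed_rel_invL[of _ P D0 D1] assms(2,6) by blast
  obtain f' N' where ps: "pstep bt n P1 f' N'" "RD bt N N'" "compat bt f f'"
    using pstep_cgr[OF assms(3) PP] gd assms(6) by auto
  obtain mu3 where mu3: "RM bt mu1 mu3" "RM bt mu' mu3" using mu_diamond[OF assms(1,4)] gm by blast
  obtain D03 where D03: "RD bt D01 D03" "RD bt D0' D03"
    using D_diamond[OF DD assms(5)] gd assms(6) goodP_DPP by auto
  have "mred bt n (mu1, D1) (f' mu3, N' + D03)" by (rule mr_step'[OF ps(1) mu3(1) D03(1)]) (simp_all add: D1)
  moreover have "mred bt n (f mu', N + D0') (f' mu3, N' + D03)"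
    by (rule mr_cgr) (use ps(3) mu3(2) compat_def in blast, rule rel_mset_plus[OF ps(2) D03(2)])
  ultimately show ?thesis by blast
qed


lemma mred_diamond:
  assumes m1: "mred bt n (mu, D) X1" and m2: "mred bt n (mu, D) X2"
    and gm: "\<And>\<sigma> x. mu = Some \<sigma> \<Longrightarrow> x \<in> fmran' \<sigma> \<Longrightarrow> DP bt x" and gd: "\<And>P. P \<in># D \<Longrightarrow> goodP bt P"
  shows "\<exists>X3. mred bt n X1 X3 \<and> mred bt n X2 X3"
  using m1
proof cases
  case (mr_cgr mu1 D1)
  from m2 show ?thesis
  proof cases
    case (mr_cgr mu2 D2)
    obtain mu3 where mu3: "RM bt mu1 mu3" "RM bt mu2 mu3"
      using mu_diamond[of bt mu mu1 mu2] \<open>RM bt mu mu1\<close> \<open>RM bt mu mu2\<close> gm by blast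
    obtain D3 where D3: "RD bt D1 D3" "RD bt D2 D3"
      using D_diamond[of bt D D1 D2] \<open>RD bt D D1\<close> \<open>RD bt D D2\<close> gd goodP_DPP by blast
    show ?thesis using mu3 D3 mr_cgr \<open>X1 = _\<close> by (auto intro: mred.mr_cgr)
  next
    case (mr_step P f N mu' D0 D0')
    then show ?thesis using mred_cgr_step[of bt mu mu1 D D1 n P f N mu' D0 D0'] \<open>X1 = _\<close> \<open>RM bt mu mu1\<close> \<open>RD bt D D1\<close> gm gd
      by auto
  qed
next
  case (mr_step P f1 N1 mu1' D0 D0')
  from m2 show ?thesis
  proof cases
    case (mr_cgr mu2 D2)
    then show ?thesis using mred_cgr_step[of bt mu mu2 D D2 n P f1 N1 mu1' D0 D0'] mr_step gm gd
      by blast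
  next
    case (mr_step Q f2 N2 mu2' E0 E0')
    have eq: "add_mset P D0 = add_mset Q E0" using \<open>D = add_mset P D0\<close> \<open>D = add_mset Q E0\<close> by simp
    obtain mu3 where mu3: "RM bt mu1' mu3" "RM bt mu2' mu3"
      using mu_diamond[of bt mu mu1' mu2'] \<open>RM bt mu mu1'\<close> \<open>RM bt mu mu2'\<close> gm by blast
    from eq[unfolded add_eq_conv_ex] show ?thesis
    proof (elim disjE exE conjE)
      assume e: "D0 = E0" "P = Q"
      obtain f3 N3 where ps: "compat bt f1 f3" "compat bt f2 f3" "RD bt N1 N3" "RD bt N2 N3"
        using pstep_diamond[of bt n P f1 N1 f2 N2] \<open>pstep bt n P f1 N1\<close> \<open>pstep bt n Q f2 N2\<close> e gd \<open>D = add_mset P D0\<close>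
        by auto
      obtain F3 where F3: "RD bt D0' F3" "RD bt E0' F3"
        using D_diamond[of bt D0 D0' E0'] \<open>RD bt D0 D0'\<close> \<open>RD bt E0 E0'\<close> e gd \<open>D = add_mset P D0\<close> goodP_DPP
        by auto
      have "mred bt n X1 (f3 mu3, N3 + F3)"
        using \<open>X1 = _\<close> ps(1) mu3(1) rel_mset_plus[OF ps(3) F3(1)] by (auto simp: compat_def intro!: mred.mr_cgr)
      moreover have "mred bt n X2 (f3 mu3, N3 + F3)"
        using \<open>X2 = _\<close> ps(2) mu3(2) rel_mset_plus[OF ps(4) F3(2)] by (auto simp: compat_def intro!: mred.mr_cgr)
      ultimately show ?thesis by blast
    next
      fix K assume e: "D0 = add_mset Q K" "E0 = add_mset P K"
      obtain Q1 K1 where D0': "D0' = add_mset Q1 K1" and QQ: "rel_prod (par bt) (par bt) Q Q1" and KK1: "RD bt K K1"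
        using msed_rel_invL[of _ Q K D0'] \<open>RD bt D0 D0'\<close> e by blast
      obtain P2 K2 where E0': "E0' = add_mset P2 K2" and PP: "rel_prod (par bt) (par bt) P P2" and KK2: "RD bt K K2"
        using msed_rel_invL[of _ P K E0'] \<open>RD bt E0 E0'\<close> e by blast
      have gP: "goodP bt P" and gQ: "goodP bt Q" and gK: "\<And>x. x \<in># K \<Longrightarrow> goodP bt x"
        using gd \<open>D = add_mset P D0\<close> e by auto
      obtain f1' M1 where p1: "pstep bt n P2 f1' M1" "RD bt N1 M1" "compat bt f1 f1'"
        using pstep_cgr[OF \<open>pstep bt n P f1 N1\<close> PP gP] by blast
      obtain f2' M2 where p2: "pstep bt n Q1 f2' M2" "RD bt N2 M2" "compat bt f2 f2'"
        using pstep_cgr[OF \<open>pstep bt n Q f2 N2\<close> QQ gQ] by blast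
      obtain K3 where K3: "RD bt K1 K3" "RD bt K2 K3"
        using D_diamond[OF KK1 KK2] gK goodP_DPP by blast
      have c1: "RM bt (f1 mu1') (f1' mu3)" using p1(3) mu3(1) by (simp add: compat_def)
      have c2: "RM bt (f2 mu2') (f2' mu3)" using p2(3) mu3(2) by (simp add: compat_def)
      have "mred bt n X1 (f2' (f1' mu3), M2 + (M1 + K3))"
        by (rule mr_step'[OF p2(1) c1 rel_mset_plus[OF p1(2) K3(1)]]) (simp_all add: \<open>X1 = _\<close> D0')
      moreover have "mred bt n X2 (f1' (f2' mu3), M1 + (M2 + K3))"
        by (rule mr_step'[OF p1(1) c2 rel_mset_plus[OF p2(2) K3(2)]]) (simp_all add: \<open>X2 = _\<close> E0')
      moreover have "f1' (f2' mu3) = f2' (f1' mu3)" by (rule pstep_comm[OF p1(1) p2(1)])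
      moreover have "M1 + (M2 + K3) = M2 + (M1 + K3)" by (simp add: add.left_commute)
      ultimately show ?thesis by metis
    qed
  qed
qed


definition botc :: "nat \<Rightarrow> (nat, trm) fmap option \<Rightarrow> (trm \<times> trm) multiset \<Rightarrow> bool" where
  "botc n mu D \<longleftrightarrow> (\<exists>\<sigma>. mu = Some \<sigma> \<and> D = {#} \<and> fmdom' \<sigma> \<noteq> {..<n}) \<or> mu = None"

lemma inv_Mtch:
  assumes "par bt (Mtch b n mu D) t"
  shows "(\<exists>b' X. t = Mtch b' n (fst X) (snd X) \<and> par bt b b' \<and> mred bt n (mu, D) X) \<or>
   (\<exists>\<sigma> \<sigma>' b'. mu = Some \<sigma> \<and> D = {#} \<and> fmdom' \<sigma> = {..<n} \<and> par bt b b' \<and> fmrel (par bt) \<sigma> \<sigma>' \<and> t = inst n \<sigma>' b') \<or>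
   (t = bt \<and> botc n mu D)"
  using assms
proof cases
  case Id
  then show ?thesis using par_refl_mu par_refl_D par.Id by (metis fst_conv snd_conv mr_cgr)
next
  case (CgrMtch b' mu' D')
  then show ?thesis by (metis fst_conv snd_conv mr_cgr)
next
  case (MatchBind b' mu' a a' D0 D' x)
  have "mred bt n (mu, D) (dunion mu' (Some (fmupd x a' fmempty)), {#} + D')"
    using MatchBind by (intro mr_step') (auto intro: ps_bind)
  then show ?thesis using MatchBind by auto
next
  case (MatchMat b' mu' D0 D' x)
  have "mred bt n (mu, D) (id mu', {#} + D')"
    using MatchMat by (intro mr_step') (auto intro: ps_mat)
  then show ?thesis using MatchMat by auto
next
  case (MatchCmp b' mu' D0 D' a1 a1' a2 a2' p1 p1' p2 p2')
  have "mred bt n (mu, D) (id mu', {#(a1', p1'), (a2', p2')#} + D')"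
    using MatchCmp by (intro mr_step') (auto intro: ps_cmp)
  then show ?thesis using MatchCmp by auto
next
  case (MatchFail b' D0 D' a p)
  have "mred bt n (mu, D) ((\<lambda>m. None) mu, {#} + D')"
    using MatchFail par_refl_mu by (intro mr_step') (auto intro: ps_fail)
  then show ?thesis using MatchFail by auto
next
  case (ResOk b' \<sigma> \<sigma>')
  then show ?thesis by auto
next
  case (ResDom \<sigma>)
  then show ?thesis by (auto simp: botc_def)
next
  case ResBot
  then show ?thesis by (auto simp: botc_def)
qed


lemma mred_Some_empty: "mred bt n (Some \<sigma>, {#}) X \<Longrightarrow> \<exists>\<sigma>1. X = (Some \<sigma>1, {#}) \<and> fmrel (par bt) \<sigma> \<sigma>1"
  by (erule mred.cases) (auto simp: option_rel_Some1)

lemma mred_None: "mred bt n (None, D) X \<Longrightarrow> fst X = None"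
  by (erule mred.cases) (auto dest: pstep_None)

lemma conf_AB:
  assumes "par bt b b1" "mred bt n (Some \<sigma>, {#}) X1" "par bt b b2" "fmrel (par bt) \<sigma> \<sigma>2"
    "fmdom' \<sigma> = {..<n}" "DP bt b" "\<And>x. x \<in> fmran' \<sigma> \<Longrightarrow> DP bt x" "pure_closed 0 0 bt"
  shows "\<exists>t3. par bt (Mtch b1 n (fst X1) (snd X1)) t3 \<and> par bt (inst n \<sigma>2 b2) t3"
proof -
  obtain \<sigma>1 where X1: "X1 = (Some \<sigma>1, {#})" "fmrel (par bt) \<sigma> \<sigma>1" using mred_Some_empty[OF assms(2)] by blast
  obtain \<sigma>3 where s3: "fmrel (par bt) \<sigma>1 \<sigma>3" "fmrel (par bt) \<sigma>2 \<sigma>3"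
    using fmrel_diamond[OF X1(2) assms(4) assms(7)] by blast
  obtain b3 where b3: "par bt b1 b3" "par bt b2 b3" using DPD[OF assms(6,1,3)] by blast
  have d1: "fmdom' \<sigma>1 = {..<n}" using fmrel_fmdom'_eq[OF X1(2)] assms(5) by simp
  have d2: "fmdom' \<sigma>2 = {..<n}" using fmrel_fmdom'_eq[OF assms(4)] assms(5) by simp
  have "par bt (Mtch b1 n (Some \<sigma>1) {#}) (inst n \<sigma>3 b3)" by (rule par.ResOk[OF b3(1) s3(1) d1])
  moreover have "par bt (inst n \<sigma>2 b2) (inst n \<sigma>3 b3)" by (rule par_inst[OF b3(2) s3(2) d2 assms(8)])
  ultimately show ?thesis using X1 by auto
qed

lemma conf_AC:
  assumes "mred bt n (mu, D) X1" "botc n mu D"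
  shows "par bt (Mtch b1 n (fst X1) (snd X1)) bt"
  using assms(2) unfolding botc_def
proof (elim disjE exE conjE)
  fix \<sigma> assume h: "mu = Some \<sigma>" "D = {#}" "fmdom' \<sigma> \<noteq> {..<n}"
  obtain \<sigma>1 where X1: "X1 = (Some \<sigma>1, {#})" "fmrel (par bt) \<sigma> \<sigma>1" using mred_Some_empty assms(1) h by blast
  have "fmdom' \<sigma>1 \<noteq> {..<n}" using fmrel_fmdom'_eq[OF X1(2)] h by simp
  then show ?thesis using X1 by (simp add: par.ResDom)
next
  assume "mu = None"
  then have "fst X1 = None" using mred_None assms(1) by blast
  then show ?thesis using par.ResBot[of bt b1 n "snd X1"] by simp
qed

lemma conf_BB:
  assumes "par bt b b1" "par bt b b2" "fmrel (par bt) \<sigma> \<sigma>1" "fmrel (par bt) \<sigma> \<sigma>2"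
    "fmdom' \<sigma> = {..<n}" "DP bt b" "\<And>x. x \<in> fmran' \<sigma> \<Longrightarrow> DP bt x" "pure_closed 0 0 bt"
  shows "\<exists>t3. par bt (inst n \<sigma>1 b1) t3 \<and> par bt (inst n \<sigma>2 b2) t3"
proof -
  obtain \<sigma>3 where s3: "fmrel (par bt) \<sigma>1 \<sigma>3" "fmrel (par bt) \<sigma>2 \<sigma>3"
    using fmrel_diamond[OF assms(3,4,7)] by blast
  obtain b3 where b3: "par bt b1 b3" "par bt b2 b3" using DPD[OF assms(6,1,2)] by blast
  have d1: "fmdom' \<sigma>1 = {..<n}" using fmrel_fmdom'_eq[OF assms(3)] assms(5) by simp
  have d2: "fmdom' \<sigma>2 = {..<n}" using fmrel_fmdom'_eq[OF assms(4)] assms(5) by simp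
  show ?thesis using par_inst[OF b3(1) s3(1) d1 assms(8)] par_inst[OF b3(2) s3(2) d2 assms(8)] by blast
qed

lemma DP_Mtch:
  assumes DPb: "DP bt b"
    and gm: "\<And>\<sigma> x. mu = Some \<sigma> \<Longrightarrow> x \<in> fmran' \<sigma> \<Longrightarrow> DP bt x" and gd: "\<And>P. P \<in># D \<Longrightarrow> goodP bt P"
    and cl: "pure_closed 0 0 bt"
  shows "DP bt (Mtch b n mu D)"
  unfolding DP_def
proof (intro allI impI)
  fix t1 t2 assume h1: "par bt (Mtch b n mu D) t1" and h2: "par bt (Mtch b n mu D) t2"
  from inv_Mtch[OF h1] show "\<exists>t3. par bt t1 t3 \<and> par bt t2 t3"
  proof (elim disjE exE conjE)
    fix b1 X1 assume A1: "t1 = Mtch b1 n (fst X1) (snd X1)" "par bt b b1" "mred bt n (mu, D) X1"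
    from inv_Mtch[OF h2] show ?thesis
    proof (elim disjE exE conjE)
      fix b2 X2 assume A2: "t2 = Mtch b2 n (fst X2) (snd X2)" "par bt b b2" "mred bt n (mu, D) X2"
      have X3e: "\<exists>X3. mred bt n X1 X3 \<and> mred bt n X2 X3" by (rule mred_diamond[OF A1(3) A2(3) gm gd])
      then obtain X3 where X3: "mred bt n X1 X3" "mred bt n X2 X3" by (elim exE conjE)
      have b3e: "\<exists>b3. par bt b1 b3 \<and> par bt b2 b3" by (rule DPD[OF DPb A1(2) A2(2)])
      then obtain b3 where b3: "par bt b1 b3" "par bt b2 b3" by (elim exE conjE)
      have m1: "mred bt n (fst X1, snd X1) (fst X3, snd X3)" using X3(1) by simp
      have m2: "mred bt n (fst X2, snd X2) (fst X3, snd X3)" using X3(2) by simp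
      have p1: "par bt t1 (Mtch b3 n (fst X3) (snd X3))"
        unfolding A1(1) by (rule mred_par[OF b3(1) m1])
      have p2: "par bt t2 (Mtch b3 n (fst X3) (snd X3))"
        unfolding A2(1) by (rule mred_par[OF b3(2) m2])
      show ?thesis using p1 p2 by blast
    next
      fix \<sigma> \<sigma>2 b2 assume B: "mu = Some \<sigma>" "D = {#}" "fmdom' \<sigma> = {..<n}" "par bt b b2" "fmrel (par bt) \<sigma> \<sigma>2" "t2 = inst n \<sigma>2 b2"
      have m: "mred bt n (Some \<sigma>, {#}) X1" using A1(3) B(1,2) by simp
      obtain t3 where "par bt (Mtch b1 n (fst X1) (snd X1)) t3" "par bt (inst n \<sigma>2 b2) t3"
        using conf_AB[OF A1(2) m B(4,5,3) DPb gm[OF B(1)] cl] by blast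
      then show ?thesis using A1(1) B(6) by blast
    next
      assume C: "t2 = bt" "botc n mu D"
      have "par bt t1 bt" using conf_AC[OF A1(3) C(2), of b1] A1(1) by simp
      then show ?thesis using C(1) par.Id by blast
    qed
  next
    fix \<sigma> \<sigma>1 b1 assume B1: "mu = Some \<sigma>" "D = {#}" "fmdom' \<sigma> = {..<n}" "par bt b b1" "fmrel (par bt) \<sigma> \<sigma>1" "t1 = inst n \<sigma>1 b1"
    from inv_Mtch[OF h2] show ?thesis
    proof (elim disjE exE conjE)
      fix b2 X2 assume A2: "t2 = Mtch b2 n (fst X2) (snd X2)" "par bt b b2" "mred bt n (mu, D) X2"
      have m: "mred bt n (Some \<sigma>, {#}) X2" using A2(3) B1(1,2) by simp
      obtain t3 where "par bt (Mtch b2 n (fst X2) (snd X2)) t3" "par bt (inst n \<sigma>1 b1) t3"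
        using conf_AB[OF A2(2) m B1(4,5,3) DPb gm[OF B1(1)] cl] by blast
      then show ?thesis using A2(1) B1(6) by blast
    next
      fix \<sigma>' \<sigma>2 b2 assume B2: "mu = Some \<sigma>'" "D = {#}" "fmdom' \<sigma>' = {..<n}" "par bt b b2" "fmrel (par bt) \<sigma>' \<sigma>2" "t2 = inst n \<sigma>2 b2"
      have e: "\<sigma>' = \<sigma>" using B1(1) B2(1) by simp
      obtain t3 where "par bt (inst n \<sigma>1 b1) t3" "par bt (inst n \<sigma>2 b2) t3"
        using conf_BB[OF B1(4) B2(4) B1(5) B2(5)[unfolded e] B1(3) DPb gm[OF B1(1)] cl] by blast
      then show ?thesis using B1(6) B2(6) by blast
    next
      assume C: "t2 = bt" "botc n mu D"
      then show ?thesis using B1(1-3) by (auto simp: botc_def)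
    qed
  next
    assume C1: "t1 = bt" "botc n mu D"
    from inv_Mtch[OF h2] show ?thesis
    proof (elim disjE exE conjE)
      fix b2 X2 assume A2: "t2 = Mtch b2 n (fst X2) (snd X2)" "par bt b b2" "mred bt n (mu, D) X2"
      have "par bt t2 bt" using conf_AC[OF A2(3) C1(2), of b2] A2(1) by simp
      then show ?thesis using C1(1) par.Id by blast
    next
      fix \<sigma> \<sigma>2 b2 assume B: "mu = Some \<sigma>" "D = {#}" "fmdom' \<sigma> = {..<n}" "par bt b b2" "fmrel (par bt) \<sigma> \<sigma>2" "t2 = inst n \<sigma>2 b2"
      then show ?thesis using C1(2) by (auto simp: botc_def)
    next
      assume "t2 = bt"
      then show ?thesis using C1 par.Id by blast
    qed
  qed
qed


definition DPA :: "trm \<Rightarrow> trm \<Rightarrow> bool" where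
  "DPA bt u \<longleftrightarrow> DP bt u \<and> (\<forall>n p b. u = Abs n p b \<longrightarrow> DP bt p \<and> DP bt b) \<and>
     (\<forall>u1 u2. u = Cmp u1 u2 \<longrightarrow> DP bt u1 \<and> DP bt u2)"

lemma RD_single: "par bt a a' \<Longrightarrow> par bt p p' \<Longrightarrow> RD bt {#(a, p)#} {#(a', p')#}"
  by (auto intro!: rel_mset_Plus rel_mset_Zero)

lemma conf_App1:
  assumes u1: "par bt u u1" and v1: "par bt v v1" and h2: "par bt (App u v) t2"
    and du: "DPA bt u" and dv: "DP bt v"
  shows "\<exists>t3. par bt (App u1 v1) t3 \<and> par bt t2 t3"
proof -
  have DPu: "DP bt u" using du by (simp add: DPA_def)
  from inv_App[OF h2] show ?thesis
  proof (elim disjE exE conjE)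
    fix u2 v2 assume h: "t2 = App u2 v2" "par bt u u2" "par bt v v2"
    obtain u3 where "par bt u1 u3" "par bt u2 u3" using DPD[OF DPu u1 h(2)] by blast
    moreover obtain v3 where "par bt v1 v3" "par bt v2 v3" using DPD[OF dv v1 h(3)] by blast
    ultimately show ?thesis using h(1) by (blast intro: par.CgrApp)
  next
    fix n p b p2 b2 v2 assume h: "u = Abs n p b" "t2 = Mtch b2 n (Some fmempty) {#(v2, p2)#}" "par bt p p2" "par bt b b2" "par bt v v2"
    have dp: "DP bt p" "DP bt b" using du h(1) by (auto simp: DPA_def)
    obtain p1 b1 where u1e: "u1 = Abs n p1 b1" "par bt p p1" "par bt b b1" using inv_Abs u1 h(1) by blast
    obtain p3 where p3: "par bt p1 p3" "par bt p2 p3" using DPD[OF dp(1) u1e(2) h(3)] by blast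
    obtain b3 where b3: "par bt b1 b3" "par bt b2 b3" using DPD[OF dp(2) u1e(3) h(4)] by blast
    obtain v3 where v3: "par bt v1 v3" "par bt v2 v3" using DPD[OF dv v1 h(5)] by blast
    have "par bt (App u1 v1) (Mtch b3 n (Some fmempty) {#(v3, p3)#})"
      unfolding u1e(1) by (rule par.Init[OF p3(1) b3(1) v3(1)])
    moreover have "par bt t2 (Mtch b3 n (Some fmempty) {#(v3, p3)#})"
      unfolding h(2) by (rule par.CgrMtch[OF b3(2) par_refl_mu RD_single[OF v3(2) p3(2)]])
    ultimately show ?thesis by blast
  next
    fix x v2 assume h: "u = Mat x" "t2 = Cmp (Mat x) v2" "par bt v v2"
    have u1e: "u1 = Mat x" using inv_Mat u1 h(1) by blast
    obtain v3 where v3: "par bt v1 v3" "par bt v2 v3" using DPD[OF dv v1 h(3)] by blast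
    have "par bt (App u1 v1) (Cmp (Mat x) v3)" unfolding u1e by (rule par.StructMat[OF v3(1)])
    moreover have "par bt t2 (Cmp (Mat x) v3)" unfolding h(2) by (rule par.CgrCmp[OF par.Id v3(2)])
    ultimately show ?thesis by blast
  next
    fix w1 w2 w1' w2' v2 assume h: "u = Cmp w1 w2" "t2 = Cmp (Cmp w1' w2') v2" "par bt w1 w1'" "par bt w2 w2'" "par bt v v2"
    have dw: "DP bt w1" "DP bt w2" using du h(1) by (auto simp: DPA_def)
    obtain w1'' w2'' where u1e: "u1 = Cmp w1'' w2''" "par bt w1 w1''" "par bt w2 w2''" using inv_Cmp u1 h(1) by blast
    obtain c1 where c1: "par bt w1'' c1" "par bt w1' c1" using DPD[OF dw(1) u1e(2) h(3)] by blast
    obtain c2 where c2: "par bt w2'' c2" "par bt w2' c2" using DPD[OF dw(2) u1e(3) h(4)] by blast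
    obtain v3 where v3: "par bt v1 v3" "par bt v2 v3" using DPD[OF dv v1 h(5)] by blast
    have "par bt (App u1 v1) (Cmp (Cmp c1 c2) v3)" unfolding u1e(1) by (rule par.StructCmp[OF c1(1) c2(1) v3(1)])
    moreover have "par bt t2 (Cmp (Cmp c1 c2) v3)" unfolding h(2)
      by (rule par.CgrCmp[OF par.CgrCmp[OF c1(2) c2(2)] v3(2)])
    ultimately show ?thesis by blast
  qed
qed


lemma DP_App:
  assumes du: "DPA bt u" and dv: "DP bt v"
  shows "DP bt (App u v)"
  unfolding DP_def
proof (intro allI impI)
  fix t1 t2 assume h1: "par bt (App u v) t1" and h2: "par bt (App u v) t2"
  have sw: "\<exists>t3. par bt t1 t3 \<and> par bt t2 t3" if "\<exists>t3. par bt t2 t3 \<and> par bt t1 t3" using that by blast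
  have DPu: "DP bt u" using du by (simp add: DPA_def)
  from inv_App[OF h1] show "\<exists>t3. par bt t1 t3 \<and> par bt t2 t3"
  proof (elim disjE exE conjE)
    fix u1 v1 assume h: "t1 = App u1 v1" "par bt u u1" "par bt v v1"
    show ?thesis using conf_App1[OF h(2,3) h2 du dv] h(1) by blast
  next
    fix n p b p1 b1 v1 assume h: "u = Abs n p b" "t1 = Mtch b1 n (Some fmempty) {#(v1, p1)#}" "par bt p p1" "par bt b b1" "par bt v v1"
    have dp: "DP bt p" "DP bt b" using du h(1) by (auto simp: DPA_def)
    from inv_App[OF h2] show ?thesis
    proof (elim disjE exE conjE)
      fix u2 v2 assume h': "t2 = App u2 v2" "par bt u u2" "par bt v v2"
      show ?thesis using conf_App1[OF h'(2,3) h1 du dv] h'(1) by blast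
    next
      fix n' p' b' p2 b2 v2 assume h': "u = Abs n' p' b'" "t2 = Mtch b2 n' (Some fmempty) {#(v2, p2)#}" "par bt p' p2" "par bt b' b2" "par bt v v2"
      have e: "n' = n" "p' = p" "b' = b" using h(1) h'(1) by auto
      obtain p3 where p3: "par bt p1 p3" "par bt p2 p3" using DPD[OF dp(1) h(3)] h'(3) e by blast
      obtain b3 where b3: "par bt b1 b3" "par bt b2 b3" using DPD[OF dp(2) h(4)] h'(4) e by blast
      obtain v3 where v3: "par bt v1 v3" "par bt v2 v3" using DPD[OF dv h(5) h'(5)] by blast
      have "par bt t1 (Mtch b3 n (Some fmempty) {#(v3, p3)#})"
        unfolding h(2) by (rule par.CgrMtch[OF b3(1) par_refl_mu RD_single[OF v3(1) p3(1)]])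
      moreover have "par bt t2 (Mtch b3 n (Some fmempty) {#(v3, p3)#})"
        unfolding h'(2) e by (rule par.CgrMtch[OF b3(2) par_refl_mu RD_single[OF v3(2) p3(2)]])
      ultimately show ?thesis by blast
    next
      fix x v2 assume "u = Mat x" then show ?thesis using h(1) by simp
    next
      fix w1 w2 w1' w2' v2 assume "u = Cmp w1 w2" then show ?thesis using h(1) by simp
    qed
  next
    fix x v1 assume h: "u = Mat x" "t1 = Cmp (Mat x) v1" "par bt v v1"
    from inv_App[OF h2] show ?thesis
    proof (elim disjE exE conjE)
      fix u2 v2 assume h': "t2 = App u2 v2" "par bt u u2" "par bt v v2"
      show ?thesis using conf_App1[OF h'(2,3) h1 du dv] h'(1) by blast
    next
      fix n p b p2 b2 v2 assume "u = Abs n p b" then show ?thesis using h(1) by simp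
    next
      fix x' v2 assume h': "u = Mat x'" "t2 = Cmp (Mat x') v2" "par bt v v2"
      obtain v3 where v3: "par bt v1 v3" "par bt v2 v3" using DPD[OF dv h(3) h'(3)] by blast
      have "par bt t1 (Cmp (Mat x) v3)" unfolding h(2) by (rule par.CgrCmp[OF par.Id v3(1)])
      moreover have "par bt t2 (Cmp (Mat x) v3)" using h(1) h'(1,2) par.CgrCmp[OF par.Id v3(2)] by simp
      ultimately show ?thesis by blast
    next
      fix w1 w2 w1' w2' v2 assume "u = Cmp w1 w2" then show ?thesis using h(1) by simp
    qed
  next
    fix w1 w2 w1' w2' v1 assume h: "u = Cmp w1 w2" "t1 = Cmp (Cmp w1' w2') v1" "par bt w1 w1'" "par bt w2 w2'" "par bt v v1"
    have dw: "DP bt w1" "DP bt w2" using du h(1) by (auto simp: DPA_def)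
    from inv_App[OF h2] show ?thesis
    proof (elim disjE exE conjE)
      fix u2 v2 assume h': "t2 = App u2 v2" "par bt u u2" "par bt v v2"
      show ?thesis using conf_App1[OF h'(2,3) h1 du dv] h'(1) by blast
    next
      fix n p b p2 b2 v2 assume "u = Abs n p b" then show ?thesis using h(1) by simp
    next
      fix x' v2 assume "u = Mat x'" then show ?thesis using h(1) by simp
    next
      fix z1 z2 z1' z2' v2 assume h': "u = Cmp z1 z2" "t2 = Cmp (Cmp z1' z2') v2" "par bt z1 z1'" "par bt z2 z2'" "par bt v v2"
      have e: "z1 = w1" "z2 = w2" using h(1) h'(1) by auto
      obtain c1 where c1: "par bt w1' c1" "par bt z1' c1" using DPD[OF dw(1) h(3)] h'(3) e by blast
      obtain c2 where c2: "par bt w2' c2" "par bt z2' c2" using DPD[OF dw(2) h(4)] h'(4) e by blast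
      obtain v3 where v3: "par bt v1 v3" "par bt v2 v3" using DPD[OF dv h(5) h'(5)] by blast
      have "par bt t1 (Cmp (Cmp c1 c2) v3)" unfolding h(2) by (rule par.CgrCmp[OF par.CgrCmp[OF c1(1) c2(1)] v3(1)])
      moreover have "par bt t2 (Cmp (Cmp c1 c2) v3)" unfolding h'(2) by (rule par.CgrCmp[OF par.CgrCmp[OF c1(2) c2(2)] v3(2)])
      ultimately show ?thesis by blast
    qed
  qed
qed

lemma DP_Var: "DP bt (Var x)"
  unfolding DP_def by (auto dest!: inv_Var intro: par.Id)
lemma DP_Mat: "DP bt (Mat x)"
  unfolding DP_def by (auto dest!: inv_Mat intro: par.Id)
lemma DP_Cmp: "DP bt a \<Longrightarrow> DP bt b \<Longrightarrow> DP bt (Cmp a b)"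
  unfolding DP_def by (blast dest!: inv_Cmp intro: par.CgrCmp)
lemma DP_Abs: "DP bt p \<Longrightarrow> DP bt b \<Longrightarrow> DP bt (Abs n p b)"
  unfolding DP_def by (blast dest!: inv_Abs intro: par.CgrAbs)


lemma size_fmran: "x \<in> fmran' \<sigma> \<Longrightarrow> size x < size (Mtch b n (Some \<sigma>) D)"
proof -
  assume "x \<in> fmran' \<sigma>"
  then obtain k where k: "fmlookup \<sigma> k = Some x" by (auto simp: fmlookup_ran'_iff)
  then have mem: "(k, x) \<in> fset (fset_of_fmap \<sigma>)" by (simp add: fset_of_fmap_iff')
  have "(\<lambda>p. Suc (case p of (a, y) \<Rightarrow> size y)) (k, x) \<le> (\<Sum>p\<in>fset (fset_of_fmap \<sigma>). (\<lambda>p. Suc (case p of (a, y) \<Rightarrow> size y)) p)"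
    by (rule member_le_sum[OF mem]) auto
  then show ?thesis by simp
qed

lemma size_pair: "P \<in># D \<Longrightarrow> size (fst P) < size (Mtch b n mu D) \<and> size (snd P) < size (Mtch b n mu D)"
proof -
  assume "P \<in># D"
  then obtain D' where "D = add_mset P D'" by (metis multi_member_split)
  then show ?thesis by (cases P) simp
qed

lemma DP_all:
  assumes cl: "pure_closed 0 0 bt"
  shows "DP bt t"
proof (induction t rule: measure_induct_rule[of size])
  case (less t)
  show ?case
  proof (cases t)
    case (Var x)
    then show ?thesis by (simp add: DP_Var)
  next
    case (Mat x)
    then show ?thesis by (simp add: DP_Mat)
  next
    case (App u v)
    have "DPA bt u" unfolding DPA_def using less App by auto
    moreover have "DP bt v" using less App by auto
    ultimately show ?thesis using App DP_App by simp
  next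
    case (Cmp a b)
    then show ?thesis using less DP_Cmp by simp
  next
    case (Abs n p b)
    then show ?thesis using less DP_Abs by simp
  next
    case (Mtch b n mu D)
    have db: "DP bt b" using less Mtch by simp
    have gm: "DP bt x" if "mu = Some \<sigma>" "x \<in> fmran' \<sigma>" for \<sigma> x
      using less size_fmran[OF that(2), of b n D] Mtch that(1) by simp
    have gd: "goodP bt P" if "P \<in># D" for P
    proof -
      have s: "size (fst P) < size t" "size (snd P) < size t" using size_pair[OF that] Mtch by auto
      show ?thesis unfolding goodP_def using s less by auto
    qed
    show ?thesis using DP_Mtch[OF db gm gd cl] Mtch by simp
  qed
qed


theorem lemma3:
  fixes bot t t1 t2 :: trm
  assumes "pure_closed 0 0 bot" and "pure_normal bot"
    and "par bot t t1" and "par bot t t2"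
  shows "\<exists>t3. par bot t1 t3 \<and> par bot t2 t3"
  using DPD[OF DP_all[OF assms(1)] assms(3) assms(4)] .

end
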